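(* Let $(X,U)$ and $(Y,V)$ be coarse ideal pairs and let $f:X\to Y$ be a coarse equivalence between them. Then there exists an isometry $W_f:\mathcal H_X\to\mathcal H_Y$ covering $f$ such that $\operatorname{Ad}_{W_f}(T)=W_fTW_f^*$ maps $\mathcal I(X,U)$ into $\mathcal I(Y,V)$ and $\mathcal G(X,U)$ into $\mathcal G(Y,V)$. Moreover, $W_f$ can be chosen to be a unitary.
   Context: Metric spaces are discrete with bounded geometry. For such $X$: $\beta X$ is the Stone–Čech compactification; the coarse groupoid $G(X)=\bigcup_{R\ge0}\overline{\{(x,y):d(x,y)\le R\}}\subseteq\beta(X\times X)$ has range/source maps $r,s:G(X)\to\beta X$ extending the coordinate projections; $U\subseteq\beta X$ is invariant if $r(\gamma)\in U\iff s(\gamma)\in U$ for all $\gamma\in G(X)$. A coarse ideal pair $(X,U)$ is a space $X$ with an invariant open $U\subseteq\beta X$. A coarse equivalence $f:X\to Y$ (extended continuously to $\beta X\to\beta Y$) is a coarse equivalence between $(X,U)$ and $(Y,V)$ if $V$ is the smallest invariant open subset of $\beta Y$ containing $f(U)$. Fix a separable infinite-dimensional Hilbert space $\mathcal H$ and $\mathcal H_X=\ell^2(X)\otimes\mathcal H$; operators are matrices with entries $T_{xy}\in\mathcal B(\mathcal H)$. $\mathbb C[X]$: finite-propagation operators with compact entries; $C^*(X)$ its closure. $\operatorname{supp}_\varepsilon(T)=\{(x,y):\|T_{xy}\|\ge\varepsilon\}$, $r(\cdot)$ the first-coordinate projection, closures in $\beta X$. $\mathcal I(X,U)$ is the closed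 ideal of $C^*(X)$ generated by $\{T\in\mathbb C[X]:\overline{r(\operatorname{supp}_\varepsilon T)}\subseteq U\ \forall\varepsilon>0\}$; $\mathcal G(X,U)=\{T\in C^*(X):\overline{r(\operatorname{supp}_\varepsilon T)}\subseteq U\ \forall\varepsilon>0\}$. An isometry $W:\mathcal H_X\to\mathcal H_Y$ covers $f$ if there is $R\ge0$ with $(\delta_y\otimes 1)W(\delta_x\otimes 1)=0$ whenever $d(y,f(x))>R$, where $\delta_x\otimes1$ denotes the projection onto $\mathbb C\delta_x\otimes\mathcal H$. *)

theory Defs
  imports "HOL-Analysis.Analysis" "HOL-Library.Function_Algebras"
begin

definition bounded_geometry :: "'a::metric_space set \<Rightarrow> bool" where
  "bounded_geometry A \<longleftrightarrow>
     (\<forall>R. \<exists>N::nat. \<forall>x\<in>A. finite {y\<in>A. dist x y \<le> R} \<and> card {y\<in>A. dist x y \<le> R} \<le> N)"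

definition bornologous :: "('a::metric_space \<Rightarrow> 'b::metric_space) \<Rightarrow> bool" where
  "bornologous f \<longleftrightarrow> (\<forall>R. \<exists>S. \<forall>x y. dist x y \<le> R \<longrightarrow> dist (f x) (f y) \<le> S)"

definition coarse_equivalence :: "('a::metric_space \<Rightarrow> 'b::metric_space) \<Rightarrow> bool" where
  "coarse_equivalence f \<longleftrightarrow> bornologous f \<and>
     (\<exists>g. bornologous g \<and> (\<exists>C. \<forall>x. dist (g (f x)) x \<le> C) \<and> (\<exists>C. \<forall>y. dist (f (g y)) y \<le> C))"

section \<open>Stone--Cech compactification of a discrete set, as ultrafilters\<close>

definition ultra :: "'a set set \<Rightarrow> bool" where
  "ultra p \<longleftrightarrow> {} \<notin> p \<and> UNIV \<in> p \<and> (\<forall>A\<in>p. \<forall>B\<in>p. A \<inter> B \<in> p)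
     \<and> (\<forall>A\<in>p. \<forall>B. A \<subseteq> B \<longrightarrow> B \<in> p) \<and> (\<forall>A. A \<in> p \<or> - A \<in> p)"

definition principal :: "'a \<Rightarrow> 'a set set" where
  "principal x = {A. x \<in> A}"

definition beta_top :: "'a set set topology" where
  "beta_top = topology (\<lambda>U. U \<subseteq> {p. ultra p} \<and>
      (\<forall>p\<in>U. \<exists>A\<in>p. {q. ultra q \<and> A \<in> q} \<subseteq> U))"

text \<open>Continuous extension beta X -> beta Y of a map X -> Y.\<close>
definition umap :: "('a \<Rightarrow> 'b) \<Rightarrow> 'a set set \<Rightarrow> 'b set set" where
  "umap f p = {B. f -` B \<in> p}"

definition coarse_groupoid :: "('a::metric_space \<times> 'a) set set set" where
  "coarse_groupoid = (\<Union>R\<in>{R::real. R \<ge> 0}.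
      beta_top closure_of (principal ` {(x, y). dist x y \<le> R}))"

definition invariant :: "'a::metric_space set set set \<Rightarrow> bool" where
  "invariant U \<longleftrightarrow> (\<forall>\<gamma>\<in>(coarse_groupoid :: ('a \<times> 'a) set set set).
      umap fst \<gamma> \<in> U \<longleftrightarrow> umap snd \<gamma> \<in> U)"

definition coarse_ideal_pair :: "'a::metric_space set set set \<Rightarrow> bool" where
  "coarse_ideal_pair U \<longleftrightarrow> bounded_geometry (UNIV :: 'a set) \<and> openin beta_top U \<and> invariant U"

definition coarse_equiv_pairs ::
  "('a::metric_space \<Rightarrow> 'b::metric_space) \<Rightarrow> 'a set set set \<Rightarrow> 'b set set set \<Rightarrow> bool" where
  "coarse_equiv_pairs f U V \<longleftrightarrow> coarse_equivalence f \<and>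
     openin beta_top V \<and> invariant V \<and> umap f ` U \<subseteq> V \<and>
     (\<forall>V'. openin beta_top V' \<and> invariant V' \<and> umap f ` U \<subseteq> V' \<longrightarrow> V \<subseteq> V')"

definition l2 :: "('i \<Rightarrow> complex) set" where
  "l2 = {v. (\<lambda>i. (cmod (v i))\<^sup>2) summable_on UNIV}"

definition l2norm :: "('i \<Rightarrow> complex) \<Rightarrow> real" where
  "l2norm v = sqrt (infsum (\<lambda>i. (cmod (v i))\<^sup>2) UNIV)"

definition l2inner :: "('i \<Rightarrow> complex) \<Rightarrow> ('i \<Rightarrow> complex) \<Rightarrow> complex" where
  "l2inner u v = infsum (\<lambda>i. u i * cnj (v i)) UNIV"

definition csc :: "complex \<Rightarrow> ('i \<Rightarrow> complex) \<Rightarrow> ('i \<Rightarrow> complex)" where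
  "csc c u = (\<lambda>i. c * u i)"

text \<open>Bounded linear operators l2(I) -> l2(J), normalised to be 0 outside l2(I).\<close>
definition BOP :: "(('i \<Rightarrow> complex) \<Rightarrow> ('j \<Rightarrow> complex)) set" where
  "BOP = {T. (\<forall>v\<in>l2. T v \<in> l2)
       \<and> (\<forall>u\<in>l2. \<forall>v\<in>l2. T (u + v) = T u + T v)
       \<and> (\<forall>c. \<forall>u\<in>l2. T (csc c u) = csc c (T u))
       \<and> (\<exists>K. \<forall>v\<in>l2. l2norm (T v) \<le> K * l2norm v)
       \<and> (\<forall>v. v \<notin> l2 \<longrightarrow> T v = 0)}"

definition opnorm :: "(('i \<Rightarrow> complex) \<Rightarrow> ('j \<Rightarrow> complex)) \<Rightarrow> real" where
  "opnorm T = Sup {l2norm (T v) | v. v \<in> l2 \<and> l2norm v \<le> 1}"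

definition adj :: "(('i \<Rightarrow> complex) \<Rightarrow> ('j \<Rightarrow> complex)) \<Rightarrow> (('j \<Rightarrow> complex) \<Rightarrow> ('i \<Rightarrow> complex))" where
  "adj W = (SOME S. S \<in> BOP \<and> (\<forall>u\<in>l2. \<forall>v\<in>l2. l2inner (W u) v = l2inner u (S v)))"

definition isometry :: "(('i \<Rightarrow> complex) \<Rightarrow> ('j \<Rightarrow> complex)) \<Rightarrow> bool" where
  "isometry W \<longleftrightarrow> W \<in> BOP \<and> (\<forall>v\<in>l2. l2norm (W v) = l2norm v)"

definition unitary :: "(('i \<Rightarrow> complex) \<Rightarrow> ('j \<Rightarrow> complex)) \<Rightarrow> bool" where
  "unitary W \<longleftrightarrow> isometry W \<and> W ` l2 = l2"

definition Ad :: "(('i \<Rightarrow> complex) \<Rightarrow> ('j \<Rightarrow> complex)) \<Rightarrow> (('i \<Rightarrow> complex) \<Rightarrow> ('i \<Rightarrow> complex))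
                  \<Rightarrow> (('j \<Rightarrow> complex) \<Rightarrow> ('j \<Rightarrow> complex))" where
  "Ad W T = W \<circ> T \<circ> adj W"

definition compact_op :: "((nat \<Rightarrow> complex) \<Rightarrow> (nat \<Rightarrow> complex)) \<Rightarrow> bool" where
  "compact_op K \<longleftrightarrow> K \<in> BOP \<and>
     (\<forall>s::nat \<Rightarrow> nat \<Rightarrow> complex. (\<forall>n. s n \<in> l2 \<and> l2norm (s n) \<le> 1) \<longrightarrow>
        (\<exists>(r::nat \<Rightarrow> nat) w. strict_mono r \<and> w \<in> l2 \<and> (\<lambda>n. l2norm (K (s (r n)) - w)) \<longlonglongrightarrow> 0))"

section \<open>H_X = l2(X) (x) H = l2(X x nat), matrix entries, Roe algebras\<close>

definition embed :: "'a \<Rightarrow> (nat \<Rightarrow> complex) \<Rightarrow> ('a \<times> nat \<Rightarrow> complex)" where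
  "embed y v = (\<lambda>(y', n). if y' = y then v n else 0)"

definition entry :: "(('a \<times> nat \<Rightarrow> complex) \<Rightarrow> ('b \<times> nat \<Rightarrow> complex)) \<Rightarrow> 'b \<Rightarrow> 'a
                     \<Rightarrow> (nat \<Rightarrow> complex) \<Rightarrow> (nat \<Rightarrow> complex)" where
  "entry T x y = (\<lambda>v. if v \<in> l2 then (\<lambda>n. T (embed y v) (x, n)) else 0)"

definition alg_roe :: "(('a::metric_space \<times> nat \<Rightarrow> complex) \<Rightarrow> ('a \<times> nat \<Rightarrow> complex)) set" where
  "alg_roe = {T \<in> BOP. (\<exists>R. \<forall>x y. dist x y > R \<longrightarrow> entry T x y = 0)
                      \<and> (\<forall>x y. compact_op (entry T x y))}"

definition roe :: "(('a::metric_space \<times> nat \<Rightarrow> complex) \<Rightarrow> ('a \<times> nat \<Rightarrow> complex)) set" where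
  "roe = {T \<in> BOP. \<forall>\<epsilon>>0. \<exists>S\<in>alg_roe. opnorm (T - S) < \<epsilon>}"

definition closed_ideal_in :: "(('i \<Rightarrow> complex) \<Rightarrow> ('i \<Rightarrow> complex)) set \<Rightarrow> (('i \<Rightarrow> complex) \<Rightarrow> ('i \<Rightarrow> complex)) set \<Rightarrow> bool" where
  "closed_ideal_in A I \<longleftrightarrow> I \<subseteq> A \<and> 0 \<in> I
     \<and> (\<forall>S\<in>I. \<forall>T\<in>I. S + T \<in> I)
     \<and> (\<forall>c. \<forall>S\<in>I. (\<lambda>v. csc c (S v)) \<in> I)
     \<and> (\<forall>a\<in>A. \<forall>S\<in>I. a \<circ> S \<in> I \<and> S \<circ> a \<in> I)
     \<and> (\<forall>T\<in>A. (\<forall>\<epsilon>>0. \<exists>S\<in>I. opnorm (T - S) < \<epsilon>) \<longrightarrow> T \<in> I)"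

definition ideal_generated :: "(('i \<Rightarrow> complex) \<Rightarrow> ('i \<Rightarrow> complex)) set \<Rightarrow> (('i \<Rightarrow> complex) \<Rightarrow> ('i \<Rightarrow> complex)) set \<Rightarrow> (('i \<Rightarrow> complex) \<Rightarrow> ('i \<Rightarrow> complex)) set" where
  "ideal_generated A J = \<Inter> {I. closed_ideal_in A I \<and> J \<subseteq> I}"

definition supp_eps :: "real \<Rightarrow> (('a \<times> nat \<Rightarrow> complex) \<Rightarrow> ('a \<times> nat \<Rightarrow> complex)) \<Rightarrow> ('a \<times> 'a) set" where
  "supp_eps \<epsilon> T = {(x, y). opnorm (entry T x y) \<ge> \<epsilon>}"

definition supported_in :: "'a set set set \<Rightarrow> (('a \<times> nat \<Rightarrow> complex) \<Rightarrow> ('a \<times> nat \<Rightarrow> complex)) \<Rightarrow> bool" where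
  "supported_in U T \<longleftrightarrow> (\<forall>\<epsilon>>0. beta_top closure_of (principal ` fst ` supp_eps \<epsilon> T) \<subseteq> U)"

definition ideal_I :: "'a::metric_space set set set \<Rightarrow> (('a \<times> nat \<Rightarrow> complex) \<Rightarrow> ('a \<times> nat \<Rightarrow> complex)) set" where
  "ideal_I U = ideal_generated roe {T \<in> alg_roe. supported_in U T}"

definition ideal_G :: "'a::metric_space set set set \<Rightarrow> (('a \<times> nat \<Rightarrow> complex) \<Rightarrow> ('a \<times> nat \<Rightarrow> complex)) set" where
  "ideal_G U = {T \<in> roe. supported_in U T}"

definition covers :: "(('a \<times> nat \<Rightarrow> complex) \<Rightarrow> ('b \<times> nat \<Rightarrow> complex)) \<Rightarrow> ('a::metric_space \<Rightarrow> 'b::metric_space) \<Rightarrow> bool" where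
  "covers W f \<longleftrightarrow> (\<exists>R\<ge>0. \<forall>x y. dist y (f x) > R \<longrightarrow> entry W y x = 0)"

end

theory Submission
  imports Defs
begin


lemma sum_fun_apply: "(sum z F) k = (\<Sum>i\<in>F. z i k)"
  by (induction F rule: infinite_finite_induct) auto

definition nsq :: "('i \<Rightarrow> complex) \<Rightarrow> 'i \<Rightarrow> real" where
  "nsq v = (\<lambda>i. (cmod (v i))\<^sup>2)"

lemma nsq_nonneg: "nsq v i \<ge> 0" by (simp add: nsq_def)

lemma l2_iff: "v \<in> l2 \<longleftrightarrow> nsq v summable_on UNIV"
  by (simp add: l2_def nsq_def)

lemma l2norm_alt: "l2norm v = sqrt (infsum (nsq v) UNIV)"
  by (simp add: l2norm_def nsq_def)

lemma infsum_nsq_nonneg: "infsum (nsq v) A \<ge> 0"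
  by (rule infsum_nonneg) (simp add: nsq_nonneg)

lemma l2norm_sq: "(l2norm v)\<^sup>2 = infsum (nsq v) UNIV"
  by (simp add: l2norm_alt infsum_nsq_nonneg)

lemma l2norm_nonneg[simp]: "l2norm v \<ge> 0"
  by (simp add: l2norm_alt infsum_nsq_nonneg)

lemma l2_zero[simp]: "0 \<in> l2"
  by (simp add: l2_iff nsq_def)

lemma l2norm_zero[simp]: "l2norm 0 = 0"
  by (simp add: l2norm_alt nsq_def)

lemma nsq_csc: "nsq (csc c v) = (\<lambda>i. (cmod c)\<^sup>2 * nsq v i)"
  by (auto simp: nsq_def csc_def norm_mult power_mult_distrib)

lemma l2_csc: "v \<in> l2 \<Longrightarrow> csc c v \<in> l2"
  unfolding l2_iff nsq_csc by (rule summable_on_cmult_right)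

lemma l2norm_csc: "l2norm (csc c v) = cmod c * l2norm v"
  unfolding l2norm_alt nsq_csc infsum_cmult_right'
  by (simp add: real_sqrt_mult)

lemma csc_zero[simp]: "csc c 0 = 0" by (simp add: csc_def fun_eq_iff)

lemma sq_add_le_real: "((x::real) + y)\<^sup>2 \<le> 2 * x\<^sup>2 + 2 * y\<^sup>2"
proof -
  have "(x+y)\<^sup>2 + (x-y)\<^sup>2 = 2 * x\<^sup>2 + 2 * y\<^sup>2" by (simp add: power2_eq_square algebra_simps)
  moreover have "(x-y)\<^sup>2 \<ge> 0" by simp
  ultimately show ?thesis by linarith
qed
lemma sq_add_le: "(cmod (a + b))\<^sup>2 \<le> 2 * (cmod a)\<^sup>2 + 2 * (cmod b)\<^sup>2"
proof -
  have "cmod (a + b) \<le> cmod a + cmod b" by (rule norm_triangle_ineq)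
  hence "(cmod (a + b))\<^sup>2 \<le> (cmod a + cmod b)\<^sup>2"
    by (simp add: power_mono)
  also have "\<dots> \<le> 2 * (cmod a)\<^sup>2 + 2 * (cmod b)\<^sup>2"
    by (rule sq_add_le_real)
  finally show ?thesis .
qed

lemma l2_add: assumes "u \<in> l2" "v \<in> l2" shows "u + v \<in> l2"
proof -
  have s: "(\<lambda>i. 2 * nsq u i + 2 * nsq v i) summable_on UNIV"
    using assms unfolding l2_iff
    by (intro summable_on_add summable_on_cmult_right)
  show ?thesis unfolding l2_iff
    by (rule summable_on_comparison_test[OF s]) (auto simp: nsq_def sq_add_le)
qed

lemma l2norm_add_sq: assumes "u \<in> l2" "v \<in> l2"
  shows "(l2norm (u + v))\<^sup>2 \<le> 2 * (l2norm u)\<^sup>2 + 2 * (l2norm v)\<^sup>2"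
proof -
  have s: "(\<lambda>i. 2 * nsq u i + 2 * nsq v i) summable_on UNIV"
    using assms unfolding l2_iff
    by (intro summable_on_add summable_on_cmult_right)
  have "infsum (nsq (u + v)) UNIV \<le> infsum (\<lambda>i. 2 * nsq u i + 2 * nsq v i) UNIV"
    apply (rule infsum_mono)
    using l2_add[OF assms] s by (auto simp: l2_iff nsq_def sq_add_le)
  also have "\<dots> = 2 * infsum (nsq u) UNIV + 2 * infsum (nsq v) UNIV"
    using assms unfolding l2_iff
    by (simp add: infsum_add summable_on_cmult_right infsum_cmult_right')
  finally show ?thesis by (simp add: l2norm_sq)
qed

lemma uminus_csc: "- v = csc (-1) v" by (simp add: csc_def fun_eq_iff)

lemma l2_uminus: "v \<in> l2 \<Longrightarrow> - v \<in> l2"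
  by (simp add: uminus_csc l2_csc)

lemma l2_diff: "u \<in> l2 \<Longrightarrow> v \<in> l2 \<Longrightarrow> u - v \<in> l2"
  using l2_add[of u "- v"] l2_uminus by (metis diff_conv_add_uminus)

lemma l2norm_uminus: "l2norm (- v) = l2norm v"
  by (simp add: uminus_csc l2norm_csc)

lemma l2norm_diff_sq: assumes "u \<in> l2" "v \<in> l2"
  shows "(l2norm (u - v))\<^sup>2 \<le> 2 * (l2norm u)\<^sup>2 + 2 * (l2norm v)\<^sup>2"
  using l2norm_add_sq[of u "- v"] assms l2_uminus l2norm_uminus
  by (metis diff_conv_add_uminus)

lemma l2_sum: "finite F \<Longrightarrow> (\<And>i. i \<in> F \<Longrightarrow> z i \<in> l2) \<Longrightarrow> sum z F \<in> l2"
  by (induction F rule: finite_induct) (auto intro: l2_add)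

lemma infsum_sum_fin:
  fixes g :: "'k \<Rightarrow> 'i \<Rightarrow> real"
  shows "finite F \<Longrightarrow> (\<And>k. k \<in> F \<Longrightarrow> g k summable_on A) \<Longrightarrow>
    infsum (\<lambda>i. \<Sum>k\<in>F. g k i) A = (\<Sum>k\<in>F. infsum (g k) A) \<and> (\<lambda>i. \<Sum>k\<in>F. g k i) summable_on A"
proof (induction F rule: finite_induct)
  case empty then show ?case by simp
next
  case (insert x F)
  then show ?case by (simp add: infsum_add summable_on_add)
qed

lemma l2norm_sum_sq:
  assumes "finite F" "\<And>k. k \<in> F \<Longrightarrow> z k \<in> l2"
  shows "(l2norm (sum z F))\<^sup>2 \<le> card F * (\<Sum>k\<in>F. (l2norm (z k))\<^sup>2)"
proof -
  have sF: "\<And>k. k \<in> F \<Longrightarrow> nsq (z k) summable_on UNIV" using assms(2) by (simp add: l2_iff)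
  note IS = infsum_sum_fin[OF assms(1) sF]
  have pw: "nsq (sum z F) i \<le> card F * (\<Sum>k\<in>F. nsq (z k) i)" for i
  proof -
    have "cmod (sum z F i) \<le> (\<Sum>k\<in>F. cmod (z k i))"
      unfolding sum_fun_apply by (rule norm_sum)
    hence "(cmod (sum z F i))\<^sup>2 \<le> (\<Sum>k\<in>F. cmod (z k i))\<^sup>2"
      by (simp add: power_mono)
    also have "\<dots> \<le> (\<Sum>k\<in>F. (cmod (z k i))\<^sup>2) * card F"
      by (rule sum_squared_le_sum_of_squares)
    finally show ?thesis by (simp add: nsq_def mult.commute)
  qed
  have "infsum (nsq (sum z F)) UNIV \<le> infsum (\<lambda>i. card F * (\<Sum>k\<in>F. nsq (z k) i)) UNIV"
    apply (rule infsum_mono)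
    using l2_sum[OF assms] IS pw by (auto simp: l2_iff intro: summable_on_cmult_right)
  also have "\<dots> = card F * (\<Sum>k\<in>F. infsum (nsq (z k)) UNIV)"
    using IS by (simp add: infsum_cmult_right')
  finally show ?thesis by (simp add: l2norm_sq)
qed

lemma nsq_comp: "nsq (v \<circ> h) = nsq v \<circ> h" by (simp add: nsq_def fun_eq_iff)

lemma l2_reindex: "bij h \<Longrightarrow> (v \<circ> h \<in> l2) = (v \<in> l2)"
  unfolding l2_iff nsq_comp
  using summable_on_reindex_bij_betw[of h UNIV UNIV "nsq v"] by (simp add: o_def)

lemma l2norm_reindex: "bij h \<Longrightarrow> l2norm (v \<circ> h) = l2norm v"
  unfolding l2norm_alt nsq_comp
  using infsum_reindex_bij_betw[of h UNIV UNIV "nsq v"] by (simp add: o_def)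

definition pr :: "(nat \<Rightarrow> bool) \<Rightarrow> (nat \<Rightarrow> 'k) \<Rightarrow> ('k \<Rightarrow> complex) \<Rightarrow> nat \<Rightarrow> complex" where
  "pr c s z = (\<lambda>n. if c n then z (s n) else 0)"

lemma pr_l2:
  assumes inj: "inj_on s {n. c n}" and z: "z \<in> l2"
  shows "pr c s z \<in> l2 \<and> l2norm (pr c s z) \<le> l2norm z"
proof -
  have e1: "nsq (pr c s z) summable_on UNIV \<longleftrightarrow> nsq (pr c s z) summable_on {n. c n}"
    by (rule summable_on_cong_neutral) (auto simp: nsq_def pr_def)
  have e1': "infsum (nsq (pr c s z)) UNIV = infsum (nsq (pr c s z)) {n. c n}"
    by (rule infsum_cong_neutral) (auto simp: nsq_def pr_def)
  have e2: "nsq (pr c s z) summable_on {n. c n} \<longleftrightarrow> nsq z summable_on (s ` {n. c n})"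
    using summable_on_reindex[OF inj, of "nsq z"]
    by (metis (mono_tags, lifting) comp_apply mem_Collect_eq nsq_def pr_def summable_on_cong)
  have e2': "infsum (nsq (pr c s z)) {n. c n} = infsum (nsq z) (s ` {n. c n})"
    using infsum_reindex[OF inj, of "nsq z"]
    by (metis (mono_tags, lifting) comp_apply mem_Collect_eq nsq_def pr_def infsum_cong)
  have zs: "nsq z summable_on UNIV" using z by (simp add: l2_iff)
  have zs': "nsq z summable_on (s ` {n. c n})"
    by (rule summable_on_subset_banach[OF zs]) auto
  have "infsum (nsq z) (s ` {n. c n}) \<le> infsum (nsq z) UNIV"
    by (rule infsum_mono_neutral[OF zs' zs]) (auto simp: nsq_nonneg)
  then show ?thesis using e1 e2 zs' e1' e2'
    by (auto simp: l2_iff l2norm_alt)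
qed

definition row :: "'a \<Rightarrow> ('a \<times> nat \<Rightarrow> complex) \<Rightarrow> nat \<Rightarrow> complex" where
  "row x w = (\<lambda>n. w (x, n))"

lemma row_l2:
  assumes w: "w \<in> l2"
  shows "row x w \<in> l2 \<and> l2norm (row x w) \<le> l2norm w"
proof -
  have inj: "inj_on (Pair x) UNIV" by (auto simp: inj_on_def)
  have zs: "nsq w summable_on UNIV" using w by (simp add: l2_iff)
  have zs': "nsq w summable_on (range (Pair x))"
    by (rule summable_on_subset_banach[OF zs]) auto
  have e: "nsq (row x w) = nsq w \<circ> Pair x" by (simp add: nsq_def row_def fun_eq_iff)
  have "infsum (nsq w) (range (Pair x)) \<le> infsum (nsq w) UNIV"
    by (rule infsum_mono_neutral[OF zs' zs]) (auto simp: nsq_nonneg)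
  then show ?thesis using zs' summable_on_reindex[OF inj, of "nsq w"] infsum_reindex[OF inj, of "nsq w"]
    by (auto simp: l2_iff l2norm_alt e)
qed

lemma embed_l2:
  assumes v: "v \<in> l2"
  shows "embed y v \<in> l2 \<and> l2norm (embed y v) = l2norm v"
proof -
  have inj: "inj_on (Pair y) UNIV" by (auto simp: inj_on_def)
  have e: "nsq (embed y v) \<circ> Pair y = nsq v" by (simp add: nsq_def embed_def fun_eq_iff)
  have c1: "nsq (embed y v) summable_on UNIV \<longleftrightarrow> nsq (embed y v) summable_on range (Pair y)"
    by (rule summable_on_cong_neutral) (auto simp: nsq_def embed_def)
  have c2: "infsum (nsq (embed y v)) UNIV = infsum (nsq (embed y v)) (range (Pair y))"
    by (rule infsum_cong_neutral) (auto simp: nsq_def embed_def)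
  show ?thesis
    using c1 c2 summable_on_reindex[OF inj, of "nsq (embed y v)"] infsum_reindex[OF inj, of "nsq (embed y v)"] v
    by (auto simp: l2_iff l2norm_alt e)
qed

definition dl :: "'i \<Rightarrow> 'i \<Rightarrow> complex" where
  "dl j = (\<lambda>i. if i = j then 1 else 0)"

lemma dl_l2: "dl j \<in> l2"
proof -
  have "nsq (dl j) summable_on {j}" by simp
  moreover have "nsq (dl j) summable_on {j} \<longleftrightarrow> nsq (dl j) summable_on UNIV"
    by (rule summable_on_cong_neutral) (auto simp: nsq_def dl_def)
  ultimately show ?thesis by (simp add: l2_iff)
qed

lemma l2inner_dl: "l2inner (dl j) z = cnj (z j)"
proof -
  have "infsum (\<lambda>i. dl j i * cnj (z i)) UNIV = infsum (\<lambda>i. dl j i * cnj (z i)) {j}"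
    by (rule infsum_cong_neutral) (auto simp: dl_def)
  then show ?thesis by (simp add: l2inner_def dl_def)
qed




lemma BOP_l2: "T \<in> BOP \<Longrightarrow> v \<in> l2 \<Longrightarrow> T v \<in> l2" by (simp add: BOP_def)
lemma BOP_add: "T \<in> BOP \<Longrightarrow> u \<in> l2 \<Longrightarrow> v \<in> l2 \<Longrightarrow> T (u + v) = T u + T v" by (simp add: BOP_def)
lemma BOP_csc: "T \<in> BOP \<Longrightarrow> u \<in> l2 \<Longrightarrow> T (csc c u) = csc c (T u)" by (simp add: BOP_def)
lemma BOP_out: "T \<in> BOP \<Longrightarrow> v \<notin> l2 \<Longrightarrow> T v = 0" by (simp add: BOP_def)
lemma BOP_bound: fixes T :: "('i \<Rightarrow> complex) \<Rightarrow> ('j \<Rightarrow> complex)"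
  assumes "T \<in> BOP" shows "\<exists>K\<ge>0. \<forall>v\<in>l2. l2norm (T v) \<le> K * l2norm v"
proof -
  from assms obtain K where K: "\<forall>v\<in>l2. l2norm (T v) \<le> K * l2norm v" by (auto simp: BOP_def)
  have "\<forall>v\<in>l2. l2norm (T v) \<le> max K 0 * l2norm v"
  proof
    fix v :: "'i \<Rightarrow> complex" assume "v \<in> l2"
    have "K * l2norm v \<le> max K 0 * l2norm v" by (rule mult_right_mono) auto
    with K \<open>v \<in> l2\<close> show "l2norm (T v) \<le> max K 0 * l2norm v" by force
  qed
  then show ?thesis by (intro exI[of _ "max K 0"]) auto
qed

lemma BOP_zero: "T \<in> BOP \<Longrightarrow> T 0 = 0"
  using BOP_add[of T 0 0] by simp

lemma BOP_diff: assumes "T \<in> BOP" "u \<in> l2" "v \<in> l2" shows "T (u - v) = T u - T v"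
proof -
  have "T u = T ((u - v) + v)" by simp
  also have "\<dots> = T (u - v) + T v" by (rule BOP_add[OF assms(1) l2_diff[OF assms(2,3)] assms(3)])
  finally show ?thesis by simp
qed

lemma BOP_sum: assumes T: "T \<in> BOP" shows "finite F \<Longrightarrow> (\<And>i. i \<in> F \<Longrightarrow> z i \<in> l2) \<Longrightarrow> T (sum z F) = (\<Sum>i\<in>F. T (z i))"
proof (induction F rule: finite_induct)
  case empty then show ?case by (simp only: sum.empty BOP_zero[OF T])
next
  case (insert x F)
  have zl: "z x \<in> l2" "sum z F \<in> l2" using insert.prems l2_sum[OF insert(1)] by auto
  have ih: "T (sum z F) = (\<Sum>i\<in>F. T (z i))" using insert.IH insert.prems by blast
  have "T (sum z (insert x F)) = T (z x + sum z F)" by (rule arg_cong[where f=T], rule sum.insert[OF insert(1,2)])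
  also have "\<dots> = T (z x) + T (sum z F)" by (rule BOP_add[OF T zl])
  also have "\<dots> = T (z x) + (\<Sum>i\<in>F. T (z i))" by (simp only: ih)
  also have "\<dots> = (\<Sum>i\<in>insert x F. T (z i))" by (rule sum.insert[OF insert(1,2), symmetric])
  finally show ?case .
qed

lemma opnorm_le:
  assumes "\<And>v. v \<in> l2 \<Longrightarrow> l2norm (T v) \<le> K * l2norm v" "0 \<le> K"
  shows "opnorm T \<le> K"
  unfolding opnorm_def
proof (rule cSup_least)
  show "{l2norm (T v) |v. v \<in> l2 \<and> l2norm v \<le> 1} \<noteq> {}" by (auto intro: exI[of _ 0])
next
  fix x assume "x \<in> {l2norm (T v) |v. v \<in> l2 \<and> l2norm v \<le> 1}"
  then obtain v where v: "v \<in> l2" "l2norm v \<le> 1" "x = l2norm (T v)" by auto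
  have "K * l2norm v \<le> K * 1" using v assms(2) by (intro mult_left_mono) auto
  then show "x \<le> K" using assms(1)[OF v(1)] v by simp
qed

lemma opnorm_bdd: assumes "T \<in> BOP" shows "bdd_above {l2norm (T v) |v. v \<in> l2 \<and> l2norm v \<le> 1}"
proof -
  obtain K where K: "K \<ge> 0" "\<forall>v\<in>l2. l2norm (T v) \<le> K * l2norm v" using BOP_bound[OF assms] by auto
  show ?thesis
  proof (rule bdd_aboveI)
    fix x assume "x \<in> {l2norm (T v) |v. v \<in> l2 \<and> l2norm v \<le> 1}"
    then obtain v where v: "v \<in> l2" "l2norm v \<le> 1" "x = l2norm (T v)" by auto
    have "K * l2norm v \<le> K * 1" using v K by (intro mult_left_mono) auto
    then show "x \<le> K" using K v by force
  qed
qed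

lemma opnorm_nonneg: assumes "T \<in> BOP" shows "opnorm T \<ge> 0"
proof -
  have "l2norm (T 0) \<le> opnorm T" unfolding opnorm_def
    by (rule cSup_upper[OF _ opnorm_bdd[OF assms]]) (auto intro!: exI[of _ 0])
  then show ?thesis by (simp add: BOP_zero[OF assms])
qed

lemma opnorm_bound: assumes T: "T \<in> BOP" and v: "v \<in> l2"
  shows "l2norm (T v) \<le> opnorm T * l2norm v"
proof (cases "l2norm v = 0")
  case True
  obtain K where K: "K \<ge> 0" "\<forall>v\<in>l2. l2norm (T v) \<le> K * l2norm v" using BOP_bound[OF T] by auto
  then show ?thesis using True v by force
next
  case False
  hence pos: "l2norm v > 0" using l2norm_nonneg[of v] by linarith
  define c where "c = complex_of_real (1 / l2norm v)"
  have cm: "cmod c = 1 / l2norm v" using pos by (simp add: c_def norm_divide)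
  have v1: "csc c v \<in> l2" "l2norm (csc c v) \<le> 1" using v pos by (auto simp: l2_csc l2norm_csc cm)
  have "l2norm (T (csc c v)) \<le> opnorm T" unfolding opnorm_def
    by (rule cSup_upper[OF _ opnorm_bdd[OF T]]) (use v1 in auto)
  hence "l2norm (T v) / l2norm v \<le> opnorm T"
    using BOP_csc[OF T v, of c] by (simp add: l2norm_csc cm)
  then show ?thesis using pos by (simp add: divide_le_eq mult.commute)
qed

lemma opnorm_zero[simp]: "opnorm (0::('i\<Rightarrow>complex)\<Rightarrow>('j\<Rightarrow>complex)) = 0"
proof -
  have e: "{l2norm ((0::('i\<Rightarrow>complex)\<Rightarrow>('j\<Rightarrow>complex)) v) |v. v \<in> l2 \<and> l2norm v \<le> 1} = {0}"
    by (auto intro!: exI[of _ 0])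
  show ?thesis unfolding opnorm_def e by simp
qed

lemma zero_comp[simp]: "0 \<circ> g = 0" by (simp add: fun_eq_iff)

lemma zero_BOP[simp]: "0 \<in> BOP"
  unfolding BOP_def by (auto intro!: exI[of _ 0])

lemma embed_add: "embed y (u + v) = embed y u + embed y v"
  by (auto simp: embed_def fun_eq_iff)
lemma embed_csc: "embed y (csc c u) = csc c (embed y u)"
  by (auto simp: embed_def fun_eq_iff csc_def)
lemma row_add: "row x (u + v) = row x u + row x v"
  by (auto simp: row_def fun_eq_iff)
lemma row_csc: "row x (csc c u) = csc c (row x u)"
  by (auto simp: row_def fun_eq_iff csc_def)

lemma entry_l2: "w \<in> l2 \<Longrightarrow> entry T x y w = row x (T (embed y w))"
  by (simp add: entry_def row_def)

lemma entry_BOP: assumes T: "T \<in> BOP" shows "entry T x y \<in> BOP"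
proof -
  obtain K where K: "K \<ge> 0" "\<forall>v\<in>l2. l2norm (T v) \<le> K * l2norm v" using BOP_bound[OF T] by auto
  have a: "entry T x y w \<in> l2 \<and> l2norm (entry T x y w) \<le> K * l2norm w" if w: "w \<in> l2" for w
  proof -
    have e: "embed y w \<in> l2" "l2norm (embed y w) = l2norm w" using embed_l2[OF w, of y] by blast+
    have t: "T (embed y w) \<in> l2" using BOP_l2[OF T e(1)] .
    have r: "row x (T (embed y w)) \<in> l2" "l2norm (row x (T (embed y w))) \<le> l2norm (T (embed y w))"
      using row_l2[OF t, of x] by blast+
    have "l2norm (T (embed y w)) \<le> K * l2norm (embed y w)" using K(2) e(1) by blast
    hence "l2norm (T (embed y w)) \<le> K * l2norm w" by (simp only: e(2))
    moreover have eq: "entry T x y w = row x (T (embed y w))" by (rule entry_l2[OF w])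
    ultimately show ?thesis unfolding eq using r e(2) by (intro conjI) linarith+
  qed
  show ?thesis unfolding BOP_def
  proof (intro CollectI conjI ballI allI impI)
    show "entry T x y v \<in> l2" if "v \<in> l2" for v using a that by auto
    show "entry T x y (u + v) = entry T x y u + entry T x y v" if "u \<in> l2" "v \<in> l2" for u v
      using that by (simp add: entry_l2 l2_add embed_add BOP_add[OF T] embed_l2 row_add)
    show "entry T x y (csc c u) = csc c (entry T x y u)" if "u \<in> l2" for c u
      using that by (simp add: entry_l2 l2_csc embed_csc BOP_csc[OF T] embed_l2 row_csc)
    show "\<exists>K. \<forall>v\<in>l2. l2norm (entry T x y v) \<le> K * l2norm v" using a by blast
    show "entry T x y v = 0" if "v \<notin> l2" for v using that by (simp add: entry_def)
  qed
qed

lemma decomp: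
  assumes "finite F" "\<And>x n. x \<notin> F \<Longrightarrow> u (x, n) = 0"
  shows "u = (\<Sum>x\<in>F. embed x (row x u))"
proof (rule ext)
  fix p :: "'a \<times> nat"
  obtain x0 n where p: "p = (x0, n)" by (cases p)
  have "(\<Sum>x\<in>F. embed x (row x u)) p = (\<Sum>x\<in>F. if x0 = x then u (x, n) else 0)"
    unfolding sum_fun_apply p by (simp add: embed_def row_def)
  also have "\<dots> = u p" using assms by (auto simp: p sum.delta)
  finally show "u p = (\<Sum>x\<in>F. embed x (row x u)) p" by simp
qed

lemma T_decomp:
  assumes T: "T \<in> BOP" and u: "u \<in> l2" and F: "finite F" and z: "\<And>x n. x \<notin> F \<Longrightarrow> u (x, n) = 0"
  shows "T u (x0, n) = (\<Sum>x\<in>F. entry T x0 x (row x u) n)"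
proof -
  have rl: "row x u \<in> l2" for x using row_l2[OF u] by auto
  have du: "u = (\<Sum>x\<in>F. embed x (row x u))" by (rule decomp[where u=u, OF F z])
  have "T (\<Sum>x\<in>F. embed x (row x u)) = (\<Sum>x\<in>F. T (embed x (row x u)))"
    by (rule BOP_sum[OF T F]) (simp add: embed_l2 rl)
  hence "T u = (\<Sum>x\<in>F. T (embed x (row x u)))" by (simp only: du[symmetric])
  hence "T u (x0, n) = (\<Sum>x\<in>F. T (embed x (row x u)) (x0, n))" by (simp add: sum_fun_apply)
  also have "\<dots> = (\<Sum>x\<in>F. entry T x0 x (row x u) n)"
    by (intro sum.cong) (simp_all add: entry_def rl)
  finally show ?thesis .
qed

definition cj :: "('b \<Rightarrow> 'a) \<Rightarrow> (('a \<Rightarrow> complex) \<Rightarrow> ('a \<Rightarrow> complex)) \<Rightarrow> (('b \<Rightarrow> complex) \<Rightarrow> ('b \<Rightarrow> complex))" where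
  "cj \<psi> T = (\<lambda>v. if v \<in> l2 then T (v \<circ> inv \<psi>) \<circ> \<psi> else 0)"

lemma comp_inv_bij: "bij \<psi> \<Longrightarrow> v \<circ> inv \<psi> \<circ> \<psi> = v"
  by (simp add: bij_def comp_assoc)
lemma comp_bij_inv: "bij \<psi> \<Longrightarrow> v \<circ> \<psi> \<circ> inv \<psi> = v"
  by (metis bij_def comp_assoc comp_id surj_iff)

lemma l2_inv_comp: "bij \<psi> \<Longrightarrow> v \<in> l2 \<Longrightarrow> v \<circ> inv \<psi> \<in> l2"
  using l2_reindex[of "inv \<psi>" v] bij_imp_bij_inv by blast

lemma cj_BOP: assumes p: "bij \<psi>" and T: "T \<in> BOP" shows "cj \<psi> T \<in> BOP"
proof -
  obtain K where K: "K \<ge> 0" "\<forall>v\<in>l2. l2norm (T v) \<le> K * l2norm v" using BOP_bound[OF T] by auto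
  have bi: "bij (inv \<psi>)" using p bij_imp_bij_inv by blast
  have a: "cj \<psi> T v \<in> l2 \<and> l2norm (cj \<psi> T v) \<le> K * l2norm v" if v: "v \<in> l2" for v
  proof -
    have "v \<circ> inv \<psi> \<in> l2" using l2_inv_comp[OF p v] .
    then show ?thesis using BOP_l2[OF T] K v l2_reindex[OF p] l2norm_reindex[OF p] l2norm_reindex[OF bi]
      by (auto simp: cj_def)
  qed
  have co: "(u + v) \<circ> g = (u \<circ> g) + (v \<circ> g)" "csc c u \<circ> g = csc c (u \<circ> g)" for u v :: "'z \<Rightarrow> complex" and g :: "'w \<Rightarrow> 'z" and c
    by (auto simp: fun_eq_iff csc_def)
  show ?thesis unfolding BOP_def
  proof (intro CollectI conjI ballI allI impI)
    show "cj \<psi> T v \<in> l2" if "v \<in> l2" for v using a that by auto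
    show "cj \<psi> T (u + v) = cj \<psi> T u + cj \<psi> T v" if "u \<in> l2" "v \<in> l2" for u v
      using that by (simp add: cj_def l2_add co BOP_add[OF T] l2_inv_comp[OF p])
    show "cj \<psi> T (csc c u) = csc c (cj \<psi> T u)" if "u \<in> l2" for c u
      using that by (simp add: cj_def l2_csc co BOP_csc[OF T] l2_inv_comp[OF p])
    show "\<exists>K. \<forall>v\<in>l2. l2norm (cj \<psi> T v) \<le> K * l2norm v" using a by blast
    show "cj \<psi> T v = 0" if "v \<notin> l2" for v using that by (simp add: cj_def)
  qed
qed

lemma cj_add: "cj \<psi> (S + T) = cj \<psi> S + cj \<psi> T"
  by (auto simp: cj_def fun_eq_iff)
lemma cj_diff: "cj \<psi> (S - T) = cj \<psi> S - cj \<psi> T"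
  by (auto simp: cj_def fun_eq_iff)
lemma cj_scal: "cj \<psi> (\<lambda>v. csc c (S v)) = (\<lambda>v. csc c (cj \<psi> S v))"
  by (auto simp: cj_def fun_eq_iff csc_def)
lemma cj_zero[simp]: "cj \<psi> 0 = 0"
  by (auto simp: cj_def fun_eq_iff)

lemma cj_comp: assumes p: "bij \<psi>" and a: "a \<in> BOP" and S: "S \<in> BOP"
  shows "cj \<psi> (a \<circ> S) = cj \<psi> a \<circ> cj \<psi> S"
proof (rule ext)
  fix v
  show "cj \<psi> (a \<circ> S) v = (cj \<psi> a \<circ> cj \<psi> S) v"
  proof (cases "v \<in> l2")
    case True
    have s: "S (v \<circ> inv \<psi>) \<in> l2" using BOP_l2[OF S l2_inv_comp[OF p True]] .
    hence "S (v \<circ> inv \<psi>) \<circ> \<psi> \<in> l2" using l2_reindex[OF p] by blast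
    then show ?thesis using True by (simp add: cj_def comp_bij_inv[OF p])
  next
    case False
    then show ?thesis by (simp add: cj_def BOP_zero[OF a])
  qed
qed

lemma cj_inv: assumes p: "bij \<psi>" and T: "T \<in> BOP" shows "cj (inv \<psi>) (cj \<psi> T) = T"
proof (rule ext)
  fix v
  show "cj (inv \<psi>) (cj \<psi> T) v = T v"
  proof (cases "v \<in> l2")
    case True
    have "v \<circ> \<psi> \<in> l2" using True l2_reindex[OF p] by blast
    then show ?thesis using True by (simp add: cj_def inv_inv_eq[OF p] comp_bij_inv[OF p] comp_inv_bij[OF p])
  next
    case False
    then show ?thesis by (simp add: cj_def BOP_out[OF T])
  qed
qed

lemma opnorm_cj: assumes p: "bij \<psi>" shows "opnorm (cj \<psi> T) = opnorm T"
proof -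
  have bi: "bij (inv \<psi>)" using p bij_imp_bij_inv by blast
  have "{l2norm (cj \<psi> T v) |v. v \<in> l2 \<and> l2norm v \<le> 1} = {l2norm (T v) |v. v \<in> l2 \<and> l2norm v \<le> 1}"
  proof (intro set_eqI iffI)
    fix x assume "x \<in> {l2norm (cj \<psi> T v) |v. v \<in> l2 \<and> l2norm v \<le> 1}"
    then obtain v where v: "v \<in> l2" "l2norm v \<le> 1" "x = l2norm (cj \<psi> T v)" by auto
    then show "x \<in> {l2norm (T v) |v. v \<in> l2 \<and> l2norm v \<le> 1}"
      by (intro CollectI exI[of _ "v \<circ> inv \<psi>"])
        (simp add: cj_def l2_inv_comp[OF p] l2norm_reindex[OF p] l2norm_reindex[OF bi])
  next
    fix x assume "x \<in> {l2norm (T v) |v. v \<in> l2 \<and> l2norm v \<le> 1}"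
    then obtain v where v: "v \<in> l2" "l2norm v \<le> 1" "x = l2norm (T v)" by auto
    have "v \<circ> \<psi> \<in> l2" using v l2_reindex[OF p] by blast
    then show "x \<in> {l2norm (cj \<psi> T v) |v. v \<in> l2 \<and> l2norm v \<le> 1}"
      using v by (intro CollectI exI[of _ "v \<circ> \<psi>"])
        (simp add: cj_def l2norm_reindex[OF p] comp_bij_inv[OF p])
  qed
  then show ?thesis by (simp add: opnorm_def)
qed

definition rx :: "('j \<Rightarrow> 'i) \<Rightarrow> ('i \<Rightarrow> complex) \<Rightarrow> ('j \<Rightarrow> complex)" where
  "rx \<psi> = (\<lambda>v. if v \<in> l2 then v \<circ> \<psi> else 0)"

lemma rx_isometry: assumes p: "bij \<psi>" shows "isometry (rx \<psi>)"
proof -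
  have co: "(u + v) \<circ> g = (u \<circ> g) + (v \<circ> g)" "csc c u \<circ> g = csc c (u \<circ> g)" for u v :: "'z \<Rightarrow> complex" and g :: "'w \<Rightarrow> 'z" and c
    by (auto simp: fun_eq_iff csc_def)
  have B: "rx \<psi> \<in> BOP" unfolding BOP_def
  proof (intro CollectI conjI ballI allI impI)
    show "rx \<psi> v \<in> l2" if "v \<in> l2" for v using that l2_reindex[OF p] by (simp add: rx_def)
    show "rx \<psi> (u + v) = rx \<psi> u + rx \<psi> v" if "u \<in> l2" "v \<in> l2" for u v
      using that by (simp add: rx_def l2_add co)
    show "rx \<psi> (csc c u) = csc c (rx \<psi> u)" if "u \<in> l2" for c u
      using that by (simp add: rx_def l2_csc co)
    show "\<exists>K. \<forall>v\<in>l2. l2norm (rx \<psi> v) \<le> K * l2norm v"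
      by (intro exI[of _ 1]) (simp add: rx_def l2norm_reindex[OF p])
    show "rx \<psi> v = 0" if "v \<notin> l2" for v using that by (simp add: rx_def)
  qed
  then show ?thesis by (simp add: isometry_def rx_def l2norm_reindex[OF p])
qed

lemma rx_unitary: assumes p: "bij \<psi>" shows "unitary (rx \<psi>)"
proof -
  have "rx \<psi> ` l2 = l2"
  proof (intro set_eqI iffI)
    fix w assume "w \<in> rx \<psi> ` l2" then show "w \<in> l2" using l2_reindex[OF p] by (auto simp: rx_def)
  next
    fix w :: "'a \<Rightarrow> complex" assume w: "w \<in> l2"
    have "w \<circ> inv \<psi> \<in> l2" using l2_inv_comp[OF p w] .
    moreover have "rx \<psi> (w \<circ> inv \<psi>) = w" using calculation by (simp add: rx_def comp_inv_bij[OF p])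
    ultimately show "w \<in> rx \<psi> ` l2" by (metis imageI)
  qed
  then show ?thesis using rx_isometry[OF p] by (simp add: unitary_def)
qed

lemma adj_rx: assumes p: "bij \<psi>" shows "adj (rx \<psi>) = rx (inv \<psi>)"
proof -
  have bi: "bij (inv \<psi>)" using p bij_imp_bij_inv by blast
  define P where "P S \<longleftrightarrow> S \<in> BOP \<and> (\<forall>u\<in>l2. \<forall>v\<in>l2. l2inner (rx \<psi> u) v = l2inner u (S v))" for S
  have P0: "P (rx (inv \<psi>))"
  proof -
    have "l2inner (rx \<psi> u) v = l2inner u (rx (inv \<psi>) v)" if "u \<in> l2" "v \<in> l2" for u v
    proof -
      have "l2inner (rx \<psi> u) v = infsum (\<lambda>i. u (\<psi> i) * cnj (v i)) UNIV"
        using that by (simp add: rx_def l2inner_def)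
      also have "\<dots> = infsum (\<lambda>j. u (\<psi> (inv \<psi> j)) * cnj (v (inv \<psi> j))) UNIV"
        using infsum_reindex_bij_betw[OF bi, of "\<lambda>i. u (\<psi> i) * cnj (v i)"] by simp
      also have "\<dots> = l2inner u (rx (inv \<psi>) v)"
        using that p by (simp add: rx_def l2inner_def bij_is_surj surj_f_inv_f)
      finally show ?thesis .
    qed
    then show ?thesis using rx_isometry[OF bi] by (simp add: P_def isometry_def)
  qed
  have uniq: "S = rx (inv \<psi>)" if "P S" for S
  proof (rule ext)
    fix v
    show "S v = rx (inv \<psi>) v"
    proof (cases "v \<in> l2")
      case False then show ?thesis using that by (auto simp: P_def BOP_out rx_def fun_eq_iff)
    next
      case True
      have "cnj (S v j) = cnj (rx (inv \<psi>) v j)" for j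
        using that P0 True dl_l2[of j] unfolding P_def by (metis l2inner_dl)
      then show ?thesis by (metis complex_cnj_cancel_iff ext)
    qed
  qed
  have "adj (rx \<psi>) = (SOME S. P S)" by (simp add: adj_def P_def)
  also have "\<dots> = rx (inv \<psi>)" using P0 uniq by (metis someI)
  finally show ?thesis .
qed

lemma Ad_rx: assumes p: "bij \<psi>" and T: "T \<in> BOP" shows "Ad (rx \<psi>) T = cj \<psi> T"
proof (rule ext)
  fix v
  show "Ad (rx \<psi>) T v = cj \<psi> T v"
  proof (cases "v \<in> l2")
    case True
    have "T (v \<circ> inv \<psi>) \<in> l2" using BOP_l2[OF T l2_inv_comp[OF p True]] .
    then show ?thesis unfolding Ad_def adj_rx[OF p] using True l2_inv_comp[OF p True] by (simp add: rx_def cj_def)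
  next
    case False
    then show ?thesis unfolding Ad_def adj_rx[OF p] by (simp add: rx_def cj_def BOP_zero[OF T])
  qed
qed




definition CP :: "((nat \<Rightarrow> complex) \<Rightarrow> (nat \<Rightarrow> complex)) \<Rightarrow> bool" where
  "CP K \<longleftrightarrow> (\<forall>s::nat \<Rightarrow> nat \<Rightarrow> complex. (\<forall>n. s n \<in> l2 \<and> l2norm (s n) \<le> 1) \<longrightarrow>
        (\<exists>(r::nat \<Rightarrow> nat) w. strict_mono r \<and> w \<in> l2 \<and> (\<lambda>n. l2norm (K (s (r n)) - w)) \<longlonglongrightarrow> 0))"

lemma compact_op_iff: "compact_op K \<longleftrightarrow> K \<in> BOP \<and> CP K"
  by (simp add: compact_op_def CP_def)

lemma CP_cong: assumes "CP K" "\<And>v. v \<in> l2 \<Longrightarrow> K' v = K v" shows "CP K'"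
  unfolding CP_def
proof (intro allI impI)
  fix s :: "nat \<Rightarrow> nat \<Rightarrow> complex" assume s: "\<forall>n. s n \<in> l2 \<and> l2norm (s n) \<le> 1"
  obtain r w where r: "strict_mono r" "w \<in> l2" "(\<lambda>n. l2norm (K (s (r n)) - w)) \<longlonglongrightarrow> 0"
    using assms(1) s unfolding CP_def by blast
  have "(\<lambda>n. l2norm (K' (s (r n)) - w)) = (\<lambda>n. l2norm (K (s (r n)) - w))" using s assms(2) by simp
  then show "\<exists>r w. strict_mono r \<and> w \<in> l2 \<and> (\<lambda>n. l2norm (K' (s (r n)) - w)) \<longlonglongrightarrow> 0"
    using r by (intro exI[of _ r] exI[of _ w]) simp
qed

lemma norm_l2norm: "norm (l2norm v) = l2norm v" by simp

lemma CP_zero: "CP (\<lambda>v. 0)"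
  unfolding CP_def
  apply (intro allI impI)
  apply (rule exI[of _ id], rule exI[of _ 0])
  by (simp add: strict_mono_id)

lemma csc_one[simp]: "csc 1 a = a" by (simp add: csc_def)

lemma l2norm_add_le: assumes "u \<in> l2" "v \<in> l2"
  shows "l2norm (u + v) \<le> sqrt (2 * (l2norm u)\<^sup>2 + 2 * (l2norm v)\<^sup>2)"
proof -
  have "sqrt ((l2norm (u + v))\<^sup>2) \<le> sqrt (2 * (l2norm u)\<^sup>2 + 2 * (l2norm v)\<^sup>2)"
    by (rule real_sqrt_le_mono[OF l2norm_add_sq[OF assms]])
  then show ?thesis by simp
qed

lemma CP_add:
  assumes K1: "CP K1" and K2: "CP K2" and l1: "\<And>v. v \<in> l2 \<Longrightarrow> K1 v \<in> l2" and l2': "\<And>v. v \<in> l2 \<Longrightarrow> K2 v \<in> l2"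
  shows "CP (\<lambda>v. K1 v + K2 v)"
  unfolding CP_def
proof (intro allI impI)
  fix s :: "nat \<Rightarrow> nat \<Rightarrow> complex" assume s: "\<forall>n. s n \<in> l2 \<and> l2norm (s n) \<le> 1"
  obtain r1 w1 where r1: "strict_mono r1" "w1 \<in> l2" "(\<lambda>n. l2norm (K1 (s (r1 n)) - w1)) \<longlonglongrightarrow> 0"
    using K1 s unfolding CP_def by blast
  have s': "\<forall>n. (s \<circ> r1) n \<in> l2 \<and> l2norm ((s \<circ> r1) n) \<le> 1" using s by simp
  obtain r2 w2 where r2: "strict_mono r2" "w2 \<in> l2" "(\<lambda>n. l2norm (K2 ((s \<circ> r1) (r2 n)) - w2)) \<longlonglongrightarrow> 0"
    using K2 s' unfolding CP_def by blast
  define a where "a n = l2norm (K1 (s (r1 (r2 n))) - w1)" for n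
  define b where "b n = l2norm (K2 (s (r1 (r2 n))) - w2)" for n
  have a: "a \<longlonglongrightarrow> 0" unfolding a_def[abs_def] using LIMSEQ_subseq_LIMSEQ[OF r1(3) r2(1)] by (simp add: o_def)
  have b: "b \<longlonglongrightarrow> 0" unfolding b_def[abs_def] using r2(3) by (simp add: o_def)
  have g: "(\<lambda>n. sqrt (2 * (a n)\<^sup>2 + 2 * (b n)\<^sup>2)) \<longlonglongrightarrow> sqrt (2 * 0\<^sup>2 + 2 * 0\<^sup>2)"
    by (intro tendsto_intros a b)
  have le: "norm (l2norm (K1 (s (r1 (r2 n))) + K2 (s (r1 (r2 n))) - (w1 + w2))) \<le> sqrt (2 * (a n)\<^sup>2 + 2 * (b n)\<^sup>2)" for n
  proof -
    have e: "K1 (s (r1 (r2 n))) + K2 (s (r1 (r2 n))) - (w1 + w2) = (K1 (s (r1 (r2 n))) - w1) + (K2 (s (r1 (r2 n))) - w2)"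
      by (simp add: algebra_simps)
    have "K1 (s (r1 (r2 n))) - w1 \<in> l2" "K2 (s (r1 (r2 n))) - w2 \<in> l2"
      using s l1 l2' r1(2) r2(2) by (auto intro!: l2_diff)
    hence "l2norm ((K1 (s (r1 (r2 n))) - w1) + (K2 (s (r1 (r2 n))) - w2)) \<le> sqrt (2 * (a n)\<^sup>2 + 2 * (b n)\<^sup>2)"
      unfolding a_def b_def by (rule l2norm_add_le)
    then show ?thesis unfolding e norm_l2norm .
  qed
  have "(\<lambda>n. l2norm (K1 (s (r1 (r2 n))) + K2 (s (r1 (r2 n))) - (w1 + w2))) \<longlonglongrightarrow> 0"
    by (rule Lim_null_comparison[OF always_eventually[OF allI[OF le]]]) (use g in simp)
  moreover have "strict_mono (r1 \<circ> r2)" using r1(1) r2(1) by (rule strict_mono_o)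
  moreover have "w1 + w2 \<in> l2" using r1(2) r2(2) by (rule l2_add)
  ultimately show "\<exists>r w. strict_mono r \<and> w \<in> l2 \<and> (\<lambda>n. l2norm (K1 (s (r n)) + K2 (s (r n)) - w)) \<longlonglongrightarrow> 0"
    by (intro exI[of _ "r1 \<circ> r2"] exI[of _ "w1 + w2"]) simp
qed

lemma CP_sum:
  assumes "finite I" "\<And>i. i \<in> I \<Longrightarrow> CP (K i)" "\<And>i v. i \<in> I \<Longrightarrow> v \<in> l2 \<Longrightarrow> K i v \<in> l2"
  shows "CP (\<lambda>v. \<Sum>i\<in>I. K i v)"
  using assms
proof (induction I rule: finite_induct)
  case empty show ?case by (rule CP_cong[OF CP_zero]) (simp add: fun_eq_iff)
next
  case (insert x F)
  have "CP (\<lambda>v. K x v + (\<Sum>i\<in>F. K i v))"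
    using insert by (intro CP_add) (auto intro!: l2_sum)
  then show ?case by (rule CP_cong) (simp add: insert(1,2) fun_eq_iff)
qed

lemma CP_left:
  assumes K: "CP K" and Kl: "\<And>v. v \<in> l2 \<Longrightarrow> K v \<in> l2"
    and Al: "\<And>z. z \<in> l2 \<Longrightarrow> A z \<in> l2" and Ad: "\<And>u w. u \<in> l2 \<Longrightarrow> w \<in> l2 \<Longrightarrow> A (u - w) = A u - A w"
    and Ab: "\<And>z. z \<in> l2 \<Longrightarrow> l2norm (A z) \<le> M * l2norm z"
  shows "CP (\<lambda>v. A (K v))"
  unfolding CP_def
proof (intro allI impI)
  fix s :: "nat \<Rightarrow> nat \<Rightarrow> complex" assume s: "\<forall>n. s n \<in> l2 \<and> l2norm (s n) \<le> 1"
  obtain r w where r: "strict_mono r" "w \<in> l2" "(\<lambda>n. l2norm (K (s (r n)) - w)) \<longlonglongrightarrow> 0"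
    using K s unfolding CP_def by blast
  have le: "norm (l2norm (A (K (s (r n))) - A w)) \<le> M * l2norm (K (s (r n)) - w)" for n
  proof -
    have k: "K (s (r n)) \<in> l2" using s Kl by blast
    have "K (s (r n)) - w \<in> l2" by (rule l2_diff[OF k r(2)])
    then show ?thesis using k using Ad[of "K (s (r n))" w] Ab[of "K (s (r n)) - w"] r(2) l2_diff by simp
  qed
  have "(\<lambda>n. M * l2norm (K (s (r n)) - w)) \<longlonglongrightarrow> M * 0"
    by (intro tendsto_intros r(3))
  hence "(\<lambda>n. l2norm (A (K (s (r n))) - A w)) \<longlonglongrightarrow> 0"
    by (intro Lim_null_comparison[OF always_eventually[OF allI[OF le]]]) simp
  then show "\<exists>r w. strict_mono r \<and> w \<in> l2 \<and> (\<lambda>n. l2norm (A (K (s (r n))) - w)) \<longlonglongrightarrow> 0"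
    using r Al by (intro exI[of _ r] exI[of _ "A w"]) simp
qed

lemma csc_diff: "csc c a - csc c b = csc c (a - b)"
  by (simp add: csc_def fun_eq_iff algebra_simps)

lemma csc_csc: "csc c (csc d a) = csc (c * d) a"
  by (simp add: csc_def fun_eq_iff)

lemma CP_right:
  assumes K: "CP K" and Kc: "\<And>u c. u \<in> l2 \<Longrightarrow> K (csc c u) = csc c (K u)"
    and Bl: "\<And>z. z \<in> l2 \<Longrightarrow> B z \<in> l2" and Bb: "\<And>z. z \<in> l2 \<Longrightarrow> l2norm (B z) \<le> M * l2norm z"
  shows "CP (\<lambda>v. K (B v))"
  unfolding CP_def
proof (intro allI impI)
  fix s :: "nat \<Rightarrow> nat \<Rightarrow> complex" assume s: "\<forall>n. s n \<in> l2 \<and> l2norm (s n) \<le> 1"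
  define M' where "M' = max M 1"
  have M'pos: "M' > 0" by (simp add: M'_def)
  define s' where "s' n = csc (complex_of_real (1 / M')) (B (s n))" for n
  have bnd: "l2norm (B (s n)) \<le> M'" for n
  proof -
    have "l2norm (B (s n)) \<le> M * l2norm (s n)" using Bb s by blast
    also have "\<dots> \<le> M' * l2norm (s n)" by (rule mult_right_mono) (auto simp: M'_def)
    also have "\<dots> \<le> M' * 1" using s M'pos by (intro mult_left_mono) auto
    finally show ?thesis by simp
  qed
  have s'h: "\<forall>n. s' n \<in> l2 \<and> l2norm (s' n) \<le> 1"
  proof
    fix n
    have "l2norm (s' n) = l2norm (B (s n)) / M'" using M'pos by (simp add: s'_def l2norm_csc norm_divide)
    also have "\<dots> \<le> 1" using bnd[of n] M'pos by simp
    finally show "s' n \<in> l2 \<and> l2norm (s' n) \<le> 1" using Bl s by (simp add: s'_def l2_csc)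
  qed
  obtain r w where r: "strict_mono r" "w \<in> l2" "(\<lambda>n. l2norm (K (s' (r n)) - w)) \<longlonglongrightarrow> 0"
    using K s'h unfolding CP_def by blast
  have Bs: "B (s n) = csc (complex_of_real M') (s' n)" for n
    using M'pos by (simp add: s'_def csc_csc)
  have eq: "l2norm (K (B (s (r n))) - csc (complex_of_real M') w) = M' * l2norm (K (s' (r n)) - w)" for n
  proof -
    have k: "K (B (s (r n))) = csc (complex_of_real M') (K (s' (r n)))"
      unfolding Bs by (rule Kc) (use s'h in blast)
    show ?thesis unfolding k csc_diff l2norm_csc using M'pos by simp
  qed
  have "(\<lambda>n. M' * l2norm (K (s' (r n)) - w)) \<longlonglongrightarrow> M' * 0"
    by (intro tendsto_intros r(3))
  hence "(\<lambda>n. l2norm (K (B (s (r n))) - csc (complex_of_real M') w)) \<longlonglongrightarrow> 0"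
    by (simp add: eq)
  then show "\<exists>r w. strict_mono r \<and> w \<in> l2 \<and> (\<lambda>n. l2norm (K (B (s (r n))) - w)) \<longlonglongrightarrow> 0"
    using r l2_csc[OF r(2)] by (intro exI[of _ r] exI[of _ "csc (complex_of_real M') w"]) simp
qed




definition Fx :: "('b \<times> nat \<Rightarrow> 'a \<times> nat) \<Rightarrow> 'b \<Rightarrow> 'a set" where
  "Fx \<psi> y = {x. \<exists>m k. \<psi> (y, m) = (x, k)}"

definition Ap :: "('b \<times> nat \<Rightarrow> 'a \<times> nat) \<Rightarrow> 'b \<Rightarrow> 'a \<Rightarrow> (nat \<Rightarrow> complex) \<Rightarrow> nat \<Rightarrow> complex" where
  "Ap \<psi> y x = pr (\<lambda>n. fst (\<psi> (y, n)) = x) (\<lambda>n. snd (\<psi> (y, n)))"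

definition Bp :: "('b \<times> nat \<Rightarrow> 'a \<times> nat) \<Rightarrow> 'b \<Rightarrow> 'a \<Rightarrow> (nat \<Rightarrow> complex) \<Rightarrow> nat \<Rightarrow> complex" where
  "Bp \<psi> y' x' = pr (\<lambda>k. fst (inv \<psi> (x', k)) = y') (\<lambda>k. snd (inv \<psi> (x', k)))"

lemma pr_diff: "pr c s (u - w) = pr c s u - pr c s w"
  by (auto simp: pr_def fun_eq_iff)
lemma pr_zero[simp]: "pr c s 0 = 0"
  by (auto simp: pr_def fun_eq_iff)

lemma Ap_diff: "Ap \<psi> y x (u - w) = Ap \<psi> y x u - Ap \<psi> y x w"
  by (simp add: Ap_def pr_diff)

lemma inj_snd_fiber:
  assumes "inj g" shows "inj_on (\<lambda>n. snd (g (y, n))) {n. fst (g (y, n)) = x}"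
proof (rule inj_onI)
  fix n n' assume "n \<in> {n. fst (g (y, n)) = x}" "n' \<in> {n. fst (g (y, n)) = x}" "snd (g (y, n)) = snd (g (y, n'))"
  hence "g (y, n) = g (y, n')" by (simp add: prod_eq_iff)
  then show "n = n'" using assms by (auto dest: injD)
qed

lemma Ap_l2: "bij \<psi> \<Longrightarrow> z \<in> l2 \<Longrightarrow> Ap \<psi> y x z \<in> l2 \<and> l2norm (Ap \<psi> y x z) \<le> l2norm z"
  unfolding Ap_def by (rule pr_l2[OF inj_snd_fiber]) (auto simp: bij_is_inj)

lemma Bp_l2: "bij \<psi> \<Longrightarrow> z \<in> l2 \<Longrightarrow> Bp \<psi> y' x' z \<in> l2 \<and> l2norm (Bp \<psi> y' x' z) \<le> l2norm z"
  unfolding Bp_def by (rule pr_l2[OF inj_snd_fiber]) (auto simp: bij_is_inj bij_imp_bij_inv)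

lemma entry_cj:
  assumes p: "bij \<psi>" and T: "T \<in> BOP" and F: "finite (Fx \<psi> y)" "finite (Fx \<psi> y')" and w: "w \<in> l2"
  shows "entry (cj \<psi> T) y y' w =
     (\<Sum>x\<in>Fx \<psi> y. \<Sum>x'\<in>Fx \<psi> y'. Ap \<psi> y x (entry T x x' (Bp \<psi> y' x' w)))"
proof (rule ext)
  fix n
  define u where "u = embed y' w \<circ> inv \<psi>"
  have el: "embed y' w \<in> l2" using embed_l2[OF w, of y'] by (rule conjunct1)
  have ul2: "u \<in> l2" unfolding u_def by (rule l2_inv_comp[OF p el])
  have ez: "u (x, k) = 0" if "x \<notin> Fx \<psi> y'" for x k
  proof (cases "inv \<psi> (x, k)")
    case (Pair a b)
    have "\<psi> (a, b) = (x, k)" using Pair p by (metis bij_inv_eq_iff)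
    then have "a \<noteq> y'" using that by (auto simp: Fx_def)
    then show ?thesis by (simp add: u_def Pair embed_def)
  qed
  have rowu: "row x' u = Bp \<psi> y' x' w" for x'
    by (auto simp: fun_eq_iff row_def u_def Bp_def pr_def embed_def split: prod.splits)
  obtain x0 n0 where xn: "\<psi> (y, n) = (x0, n0)" by (cases "\<psi> (y, n)")
  have x0: "x0 \<in> Fx \<psi> y" using xn by (auto simp: Fx_def)
  have lhs: "entry (cj \<psi> T) y y' w n = T u (x0, n0)"
    using w el xn by (simp add: entry_def cj_def u_def)
  have t: "T u (x0, n0) = (\<Sum>x'\<in>Fx \<psi> y'. entry T x0 x' (Bp \<psi> y' x' w) n0)"
    using T_decomp[OF T ul2 F(2), of x0 n0] ez by (simp add: rowu)
  have g: "Ap \<psi> y x z n = (if x = x0 then z n0 else 0)" for x z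
    by (auto simp: Ap_def pr_def xn)
  have "(\<Sum>x\<in>Fx \<psi> y. \<Sum>x'\<in>Fx \<psi> y'. Ap \<psi> y x (entry T x x' (Bp \<psi> y' x' w))) n
      = (\<Sum>x\<in>Fx \<psi> y. \<Sum>x'\<in>Fx \<psi> y'. Ap \<psi> y x (entry T x x' (Bp \<psi> y' x' w)) n)"
    by (simp add: sum_fun_apply)
  also have "\<dots> = (\<Sum>x\<in>Fx \<psi> y. if x = x0 then (\<Sum>x'\<in>Fx \<psi> y'. entry T x x' (Bp \<psi> y' x' w) n0) else 0)"
    by (intro sum.cong) (auto simp: g)
  also have "\<dots> = (\<Sum>x'\<in>Fx \<psi> y'. entry T x0 x' (Bp \<psi> y' x' w) n0)"
    using x0 F(1) by (simp add: sum.delta')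
  finally show "entry (cj \<psi> T) y y' w n = (\<Sum>x\<in>Fx \<psi> y. \<Sum>x'\<in>Fx \<psi> y'. Ap \<psi> y x (entry T x x' (Bp \<psi> y' x' w))) n"
    using lhs t by simp
qed

lemma alg_roe_D: "T \<in> alg_roe \<Longrightarrow> T \<in> BOP \<and> (\<exists>R. \<forall>x y. dist x y > R \<longrightarrow> entry T x y = 0) \<and> (\<forall>x y. compact_op (entry T x y))"
  by (simp add: alg_roe_def)

lemma cj_alg_roe:
  fixes \<psi> :: "'b::metric_space \<times> nat \<Rightarrow> 'a::metric_space \<times> nat"
  assumes p: "bij \<psi>" and T: "T \<in> alg_roe"
    and fin: "\<And>y. finite (Fx \<psi> y)"
    and H3: "\<And>R. \<exists>R'. \<forall>y y' x x'. x \<in> Fx \<psi> y \<longrightarrow> x' \<in> Fx \<psi> y' \<longrightarrow> dist x x' \<le> R \<longrightarrow> dist y y' \<le> R'"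
  shows "cj \<psi> T \<in> alg_roe"
proof -
  have TB: "T \<in> BOP" and cT: "\<And>x y. compact_op (entry T x y)" using alg_roe_D[OF T] by auto
  obtain R where R: "\<And>x y. dist x y > R \<Longrightarrow> entry T x y = 0" using alg_roe_D[OF T] by blast
  obtain R' where R': "\<And>y y' x x'. x \<in> Fx \<psi> y \<Longrightarrow> x' \<in> Fx \<psi> y' \<Longrightarrow> dist x x' \<le> R \<Longrightarrow> dist y y' \<le> R'"
    using H3[of R] by blast
  have cB: "cj \<psi> T \<in> BOP" by (rule cj_BOP[OF p TB])
  have prp: "entry (cj \<psi> T) y y' = 0" if d: "dist y y' > R'" for y y'
  proof (rule ext)
    fix w
    show "entry (cj \<psi> T) y y' w = 0 w"
    proof (cases "w \<in> l2")
      case False then show ?thesis by (simp add: entry_def)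
    next
      case True
      have z: "entry T x x' = 0" if "x \<in> Fx \<psi> y" "x' \<in> Fx \<psi> y'" for x x'
      proof (rule R)
        show "dist x x' > R" using R'[OF that] d by force
      qed
      show ?thesis unfolding entry_cj[OF p TB fin fin True]
        by (simp add: z Ap_def)
    qed
  qed
  have comp: "compact_op (entry (cj \<psi> T) y y')" for y y'
  proof -
    have ET: "entry T x x' \<in> BOP" "CP (entry T x x')" for x x' using cT[of x x'] by (auto simp: compact_op_iff)
    have inner: "CP (\<lambda>w. Ap \<psi> y x (entry T x x' (Bp \<psi> y' x' w)))" for x x'
    proof (rule CP_left[where A="Ap \<psi> y x" and K="\<lambda>w. entry T x x' (Bp \<psi> y' x' w)" and M=1])
      show "CP (\<lambda>w. entry T x x' (Bp \<psi> y' x' w))"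
        by (rule CP_right[where K="entry T x x'" and B="Bp \<psi> y' x'" and M=1, OF ET(2)]) (auto simp: BOP_csc[OF ET(1)] Bp_l2[OF p])
      show "entry T x x' (Bp \<psi> y' x' v) \<in> l2" if "v \<in> l2" for v
        using BOP_l2[OF ET(1)] Bp_l2[OF p that] by blast
    qed (auto simp: Ap_l2[OF p] Ap_diff)
    have l2i: "Ap \<psi> y x (entry T x x' (Bp \<psi> y' x' v)) \<in> l2" if "v \<in> l2" for x x' v
      using Ap_l2[OF p] BOP_l2[OF ET(1)] Bp_l2[OF p that] by blast
    have "CP (\<lambda>w. \<Sum>x\<in>Fx \<psi> y. \<Sum>x'\<in>Fx \<psi> y'. Ap \<psi> y x (entry T x x' (Bp \<psi> y' x' w)))"
      apply (rule CP_sum[OF fin])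
       apply (rule CP_sum[OF fin])
      using inner l2i by (auto intro!: l2_sum fin)
    then show ?thesis unfolding compact_op_iff
      using entry_BOP[OF cB] by (auto intro: CP_cong simp: entry_cj[OF p TB fin fin])
  qed
  show ?thesis unfolding alg_roe_def using cB prp comp by blast
qed

lemma cj_roe:
  fixes \<psi> :: "'b::metric_space \<times> nat \<Rightarrow> 'a::metric_space \<times> nat"
  assumes p: "bij \<psi>" and T: "T \<in> roe"
    and fin: "\<And>y. finite (Fx \<psi> y)"
    and H3: "\<And>R. \<exists>R'. \<forall>y y' x x'. x \<in> Fx \<psi> y \<longrightarrow> x' \<in> Fx \<psi> y' \<longrightarrow> dist x x' \<le> R \<longrightarrow> dist y y' \<le> R'"
  shows "cj \<psi> T \<in> roe"
proof -
  have TB: "T \<in> BOP" using T by (simp add: roe_def)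
  have "\<exists>S\<in>alg_roe. opnorm (cj \<psi> T - S) < e" if e: "e > 0" for e
  proof -
    obtain S where S: "S \<in> alg_roe" "opnorm (T - S) < e" using T e by (auto simp: roe_def)
    have "cj \<psi> S \<in> alg_roe" by (rule cj_alg_roe[OF p S(1) fin H3])
    moreover have "opnorm (cj \<psi> T - cj \<psi> S) < e" using S(2) by (simp add: cj_diff[symmetric] opnorm_cj[OF p])
    ultimately show ?thesis by blast
  qed
  then show ?thesis using cj_BOP[OF p TB] by (simp add: roe_def)
qed

lemma cj_supp:
  fixes \<psi> :: "'b \<times> nat \<Rightarrow> 'a \<times> nat"
  assumes p: "bij \<psi>" and T: "T \<in> BOP"
    and N: "\<And>y. finite (Fx \<psi> y) \<and> card (Fx \<psi> y) \<le> N" and e: "e > 0"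
  shows "\<exists>d>0. fst ` supp_eps e (cj \<psi> T) \<subseteq> {y. \<exists>x\<in>Fx \<psi> y. x \<in> fst ` supp_eps d T}"
proof -
  define d where "d = e / (real N * real N + 1)"
  have "0 \<le> real N * real N" by simp
  hence Np: "real N * real N + 1 > 0" by linarith
  have dpos: "d > 0" unfolding d_def using e Np by (rule divide_pos_pos)
  have NNd: "real N * real N * d < e"
  proof -
    have "real N * real N * d = e * (real N * real N) / (real N * real N + 1)" by (simp add: d_def)
    also have "\<dots> < e" using e Np by (simp add: divide_less_eq)
    finally show ?thesis .
  qed
  have fin: "finite (Fx \<psi> y)" for y using N by blast
  have "y \<in> {y. \<exists>x\<in>Fx \<psi> y. x \<in> fst ` supp_eps d T}" if yin: "y \<in> fst ` supp_eps e (cj \<psi> T)" for y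
  proof (rule ccontr)
    assume na: "y \<notin> {y. \<exists>x\<in>Fx \<psi> y. x \<in> fst ` supp_eps d T}"
    obtain q where q: "q \<in> supp_eps e (cj \<psi> T)" "y = fst q" using yin by blast
    obtain y' where y': "opnorm (entry (cj \<psi> T) y y') \<ge> e" using q by (cases q) (auto simp: supp_eps_def)
    have small: "opnorm (entry T x x') < d" if "x \<in> Fx \<psi> y" for x x'
    proof (rule ccontr)
      assume "\<not> opnorm (entry T x x') < d"
      hence "(x, x') \<in> supp_eps d T" by (simp add: supp_eps_def)
      hence "x \<in> fst ` supp_eps d T" by force
      then show False using na that by blast
    qed
    define A where "A = Fx \<psi> y"
    define B where "B = Fx \<psi> y'"
    have fA: "finite A" and fB: "finite B" by (simp_all add: A_def B_def fin)
    have cA: "card A \<le> N" and cB: "card B \<le> N" using N by (simp_all add: A_def B_def)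
    have bound: "l2norm (entry (cj \<psi> T) y y' w) \<le> (real (card A) * real (card B) * d) * l2norm w" if w: "w \<in> l2" for w
    proof -
      define g where "g x x' = Ap \<psi> y x (entry T x x' (Bp \<psi> y' x' w))" for x x'
      have gl: "g x x' \<in> l2" for x x'
        unfolding g_def using Ap_l2[OF p] BOP_l2[OF entry_BOP[OF T]] Bp_l2[OF p w] by blast
      have gb: "(l2norm (g x x'))\<^sup>2 \<le> (d * l2norm w)\<^sup>2" if "x \<in> A" for x x'
      proof -
        have bl: "Bp \<psi> y' x' w \<in> l2" "l2norm (Bp \<psi> y' x' w) \<le> l2norm w" using Bp_l2[OF p w] by auto
        have "l2norm (g x x') \<le> l2norm (entry T x x' (Bp \<psi> y' x' w))"
          unfolding g_def using Ap_l2[OF p BOP_l2[OF entry_BOP[OF T] bl(1)]] by blast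
        also have "\<dots> \<le> opnorm (entry T x x') * l2norm (Bp \<psi> y' x' w)"
          by (rule opnorm_bound[OF entry_BOP[OF T] bl(1)])
        also have "\<dots> \<le> d * l2norm w"
          using small[of x x'] that bl(2) opnorm_nonneg[OF entry_BOP[OF T]] dpos
          by (intro mult_mono) (auto simp: A_def)
        finally show ?thesis by (intro power_mono) auto
      qed
      define h where "h x = (\<Sum>x'\<in>B. g x x')" for x
      have hl: "h x \<in> l2" for x unfolding h_def by (rule l2_sum[OF fB gl])
      have hb: "(l2norm (h x))\<^sup>2 \<le> real (card B) * (real (card B) * (d * l2norm w)\<^sup>2)" if "x \<in> A" for x
      proof -
        have "(l2norm (h x))\<^sup>2 \<le> real (card B) * (\<Sum>x'\<in>B. (l2norm (g x x'))\<^sup>2)"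
          unfolding h_def by (rule l2norm_sum_sq[OF fB gl])
        also have "\<dots> \<le> real (card B) * (real (card B) * (d * l2norm w)\<^sup>2)"
          using sum_bounded_above[of B "\<lambda>x'. (l2norm (g x x'))\<^sup>2" "(d * l2norm w)\<^sup>2"] gb[OF that]
          by (intro mult_left_mono) auto
        finally show ?thesis .
      qed
      have e1: "entry (cj \<psi> T) y y' w = (\<Sum>x\<in>A. h x)"
        unfolding entry_cj[OF p T fin fin w] A_def B_def h_def g_def ..
      have "(l2norm (\<Sum>x\<in>A. h x))\<^sup>2 \<le> real (card A) * (\<Sum>x\<in>A. (l2norm (h x))\<^sup>2)"
        by (rule l2norm_sum_sq[OF fA hl])
      also have "\<dots> \<le> real (card A) * (real (card A) * (real (card B) * (real (card B) * (d * l2norm w)\<^sup>2)))"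
        using sum_bounded_above[of A "\<lambda>x. (l2norm (h x))\<^sup>2"] hb
        by (intro mult_left_mono) auto
      also have "\<dots> = ((real (card A) * real (card B) * d) * l2norm w)\<^sup>2"
        by (simp add: power2_eq_square algebra_simps)
      finally have "(l2norm (entry (cj \<psi> T) y y' w))\<^sup>2 \<le> ((real (card A) * real (card B) * d) * l2norm w)\<^sup>2"
        unfolding e1 .
      then show ?thesis
        by (rule power2_le_imp_le) (use dpos in simp)
    qed
    have nn: "0 \<le> real (card A) * real (card B) * d" using dpos by (intro mult_nonneg_nonneg) simp_all
    have "opnorm (entry (cj \<psi> T) y y') \<le> real (card A) * real (card B) * d"
      by (rule opnorm_le[OF bound nn])
    also have "\<dots> \<le> real N * real N * d"
      using cA cB dpos by (intro mult_right_mono mult_mono) auto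
    finally show False using y' NNd by linarith
  qed
  then show ?thesis using dpos by blast
qed




definition bopen :: "'a set set set \<Rightarrow> bool" where
  "bopen U \<longleftrightarrow> U \<subseteq> {p. ultra p} \<and> (\<forall>p\<in>U. \<exists>A\<in>p. {q. ultra q \<and> A \<in> q} \<subseteq> U)"

lemma ultra_inter: "ultra p \<Longrightarrow> A \<in> p \<Longrightarrow> B \<in> p \<Longrightarrow> A \<inter> B \<in> p"
  by (simp add: ultra_def)
lemma ultra_mono: "ultra p \<Longrightarrow> A \<in> p \<Longrightarrow> A \<subseteq> B \<Longrightarrow> B \<in> p"
  by (simp add: ultra_def)
lemma ultra_empty: "ultra p \<Longrightarrow> {} \<notin> p"
  by (simp add: ultra_def)
lemma ultra_UNIV: "ultra p \<Longrightarrow> UNIV \<in> p"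
  by (simp add: ultra_def)
lemma ultra_compl: "ultra p \<Longrightarrow> A \<notin> p \<Longrightarrow> - A \<in> p"
  unfolding ultra_def by blast
lemma ultra_not_both: "ultra p \<Longrightarrow> A \<in> p \<Longrightarrow> - A \<in> p \<Longrightarrow> False"
  using ultra_inter[of p A "- A"] ultra_empty by auto
lemma ultra_nonempty: "ultra p \<Longrightarrow> A \<in> p \<Longrightarrow> A \<noteq> {}"
  using ultra_empty by auto

lemma istop_bopen: "istopology (bopen :: 'a set set set \<Rightarrow> bool)"
  unfolding istopology_def
proof (intro conjI allI impI ballI)
  fix S T :: "'a set set set" assume S: "bopen S" and T: "bopen T"
  show "bopen (S \<inter> T)" unfolding bopen_def
  proof (intro conjI ballI)
    show "S \<inter> T \<subseteq> {p. ultra p}" using S by (auto simp: bopen_def)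
    fix p assume p: "p \<in> S \<inter> T"
    obtain A where A: "A \<in> p" "{q. ultra q \<and> A \<in> q} \<subseteq> S" using S p by (auto simp: bopen_def)
    obtain B where B: "B \<in> p" "{q. ultra q \<and> B \<in> q} \<subseteq> T" using T p by (auto simp: bopen_def)
    have up: "ultra p" using S p by (auto simp: bopen_def)
    have "{q. ultra q \<and> A \<inter> B \<in> q} \<subseteq> S \<inter> T"
    proof
      fix q assume q: "q \<in> {q. ultra q \<and> A \<inter> B \<in> q}"
      hence "A \<in> q" "B \<in> q" using ultra_mono[of q "A \<inter> B"] by auto
      then show "q \<in> S \<inter> T" using q A(2) B(2) by blast
    qed
    then show "\<exists>C\<in>p. {q. ultra q \<and> C \<in> q} \<subseteq> S \<inter> T"
      using ultra_inter[OF up A(1) B(1)] by blast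
  qed
next
  fix K :: "'a set set set set" assume K: "\<forall>S\<in>K. bopen S"
  show "bopen (\<Union>K)" unfolding bopen_def
  proof (intro conjI ballI)
    show "\<Union>K \<subseteq> {p. ultra p}" using K by (auto simp: bopen_def)
    fix p assume "p \<in> \<Union>K"
    then obtain S where S: "S \<in> K" "p \<in> S" by auto
    obtain A where "A \<in> p" "{q. ultra q \<and> A \<in> q} \<subseteq> S" using K S unfolding bopen_def by blast
    then show "\<exists>A\<in>p. {q. ultra q \<and> A \<in> q} \<subseteq> \<Union>K" using S by blast
  qed
qed

lemma openin_beta: "openin (beta_top :: 'a set set topology) = bopen"
proof -
  have e: "(beta_top :: 'a set set topology) = topology bopen" by (simp add: beta_top_def bopen_def[abs_def])
  show ?thesis unfolding e by (rule topology_inverse'[OF istop_bopen])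
qed

lemma basic_open: "openin beta_top {q. ultra q \<and> A \<in> q}"
  unfolding openin_beta bopen_def by auto

lemma topspace_beta: "topspace beta_top = {p. ultra p}"
proof
  show "topspace beta_top \<subseteq> {p. ultra p}"
    using openin_topspace[of beta_top] unfolding openin_beta bopen_def by blast
  have o: "openin beta_top {q. ultra q \<and> UNIV \<in> q}" by (rule basic_open)
  have e: "{q. ultra q \<and> UNIV \<in> q} = {p. ultra p}" by (auto simp: ultra_UNIV)
  show "{p. ultra p} \<subseteq> topspace beta_top" using openin_subset[OF o] unfolding e .
qed

lemma ultra_principal: "ultra (principal x)"
  by (auto simp: ultra_def principal_def)

lemma closure_principal: "beta_top closure_of (principal ` A) = {p. ultra p \<and> A \<in> p}"
proof (intro set_eqI iffI)
  fix p assume p: "p \<in> beta_top closure_of (principal ` A)"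
  have up: "ultra p" using p topspace_beta by (auto simp: closure_of_def)
  show "p \<in> {p. ultra p \<and> A \<in> p}"
  proof (rule ccontr)
    assume "p \<notin> {p. ultra p \<and> A \<in> p}"
    hence nA: "- A \<in> p" using up ultra_compl by blast
    have pc: "\<And>T. p \<in> T \<Longrightarrow> openin beta_top T \<Longrightarrow> (\<exists>y\<in>principal ` A. y \<in> T)"
      using p unfolding closure_of_def by blast
    have "\<exists>y\<in>principal ` A. y \<in> {q. ultra q \<and> - A \<in> q}"
      by (rule pc) (use nA up basic_open[of "- A"] in auto)
    then obtain a where "a \<in> A" "- A \<in> principal a" by auto
    then show False by (simp add: principal_def)
  qed
next
  fix p assume p: "p \<in> {p. ultra p \<and> A \<in> p}"
  show "p \<in> beta_top closure_of (principal ` A)" unfolding closure_of_def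
  proof (intro CollectI conjI allI impI)
    show "p \<in> topspace beta_top" using p topspace_beta by auto
    fix T assume T: "p \<in> T \<and> openin beta_top T"
    then obtain B where B: "B \<in> p" "{q. ultra q \<and> B \<in> q} \<subseteq> T" unfolding openin_beta bopen_def by blast
    have "A \<inter> B \<in> p" using p B ultra_inter by blast
    then obtain a where a: "a \<in> A" "a \<in> B" using p ultra_nonempty by blast
    have "principal a \<in> {q. ultra q \<and> B \<in> q}" using a(2) ultra_principal[of a] by (simp add: principal_def)
    hence "principal a \<in> T" using B(2) by blast
    then show "\<exists>y\<in>principal ` A. y \<in> T" using a by blast
  qed
qed

lemma umap_ultra: assumes u: "ultra p" shows "ultra (umap h p)"
  unfolding ultra_def umap_def
proof (intro conjI ballI allI impI)
  show "{} \<notin> {B. h -` B \<in> p}" using ultra_empty[OF u] by simp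
  show "UNIV \<in> {B. h -` B \<in> p}" using ultra_UNIV[OF u] by simp
  fix A B assume "A \<in> {B. h -` B \<in> p}" "B \<in> {B. h -` B \<in> p}"
  then show "A \<inter> B \<in> {B. h -` B \<in> p}" using ultra_inter[OF u] by simp
next
  fix A B assume "A \<in> {B. h -` B \<in> p}" "A \<subseteq> B"
  then show "B \<in> {B. h -` B \<in> p}" using ultra_mono[OF u, of "h -` A" "h -` B"] by auto
next
  fix A show "A \<in> {B. h -` B \<in> p} \<or> - A \<in> {B. h -` B \<in> p}"
    using ultra_compl[OF u, of "h -` A"] by (auto simp: vimage_Compl)
qed

lemma ultra_eq: assumes "ultra p" "ultra q" "q \<subseteq> p" shows "p = q"
proof
  show "p \<subseteq> q"
  proof
    fix B assume B: "B \<in> p"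
    show "B \<in> q"
    proof (rule ccontr)
      assume "B \<notin> q"
      hence "- B \<in> q" using assms(2) ultra_compl by blast
      hence "- B \<in> p" using assms(3) by blast
      then show False using B assms(1) ultra_not_both by blast
    qed
  qed
qed (use assms in blast)

definition filt :: "'a set set \<Rightarrow> bool" where
  "filt M \<longleftrightarrow> {} \<notin> M \<and> (\<forall>A\<in>M. \<forall>B\<in>M. A \<inter> B \<in> M) \<and> (\<forall>A\<in>M. \<forall>B. A \<subseteq> B \<longrightarrow> B \<in> M)"

lemma maximal_filt_ultra:
  assumes f: "filt M" and ne: "M \<noteq> {}" and mx: "\<And>M'. filt M' \<Longrightarrow> M \<subseteq> M' \<Longrightarrow> M' = M"
  shows "ultra M"
proof -
  have U: "UNIV \<in> M" using f ne unfolding filt_def by blast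
  have compl: "A \<in> M \<or> - A \<in> M" for A
  proof (rule ccontr)
    assume n: "\<not> (A \<in> M \<or> - A \<in> M)"
    show False
    proof (cases "\<forall>m\<in>M. A \<inter> m \<noteq> {}")
      case True
      define M' where "M' = {Z. \<exists>m\<in>M. A \<inter> m \<subseteq> Z}"
      have "filt M'" unfolding filt_def M'_def
      proof (intro conjI ballI allI impI)
        show "{} \<notin> {Z. \<exists>m\<in>M. A \<inter> m \<subseteq> Z}" using True by auto
        fix X Y assume X: "X \<in> {Z. \<exists>m\<in>M. A \<inter> m \<subseteq> Z}" and Y: "Y \<in> {Z. \<exists>m\<in>M. A \<inter> m \<subseteq> Z}"
        then obtain m1 m2 where "m1 \<in> M" "A \<inter> m1 \<subseteq> X" "m2 \<in> M" "A \<inter> m2 \<subseteq> Y" by auto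
        moreover have "m1 \<inter> m2 \<in> M" using calculation f unfolding filt_def by blast
        ultimately show "X \<inter> Y \<in> {Z. \<exists>m\<in>M. A \<inter> m \<subseteq> Z}" by blast
      next
        fix X Y assume "X \<in> {Z. \<exists>m\<in>M. A \<inter> m \<subseteq> Z}" "X \<subseteq> Y"
        then show "Y \<in> {Z. \<exists>m\<in>M. A \<inter> m \<subseteq> Z}" by blast
      qed
      moreover have "M \<subseteq> M'" unfolding M'_def by blast
      ultimately have "M' = M" by (rule mx)
      moreover have "A \<in> M'" unfolding M'_def using U by blast
      ultimately show False using n by blast
    next
      case False
      then obtain m where "m \<in> M" "A \<inter> m = {}" by blast
      hence "m \<subseteq> - A" by blast
      hence "- A \<in> M" using f \<open>m \<in> M\<close> unfolding filt_def by blast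
      then show False using n by blast
    qed
  qed
  have f': "{} \<notin> M" "\<forall>A\<in>M. \<forall>B\<in>M. A \<inter> B \<in> M" "\<forall>A\<in>M. \<forall>B. A \<subseteq> B \<longrightarrow> B \<in> M"
    using f unfolding filt_def by auto
  show ?thesis unfolding ultra_def by (intro conjI f' U allI compl)
qed

lemma ultra_lift:
  assumes q: "ultra q" and E: "h ` E \<in> q"
  shows "\<exists>g. ultra g \<and> E \<in> g \<and> umap h g = q"
proof -
  define M0 where "M0 = {Z. \<exists>B\<in>q. E \<inter> h -` B \<subseteq> Z}"
  define FF where "FF = {M. filt M \<and> M0 \<subseteq> M}"
  have ne0: "E \<inter> h -` B \<noteq> {}" if "B \<in> q" for B
  proof -
    have "h ` E \<inter> B \<in> q" using q E that ultra_inter by blast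
    then have "h ` E \<inter> B \<noteq> {}" using q ultra_nonempty by blast
    then show ?thesis by blast
  qed
  have fM0: "filt M0" unfolding filt_def M0_def
  proof (intro conjI ballI allI impI)
    show "{} \<notin> {Z. \<exists>B\<in>q. E \<inter> h -` B \<subseteq> Z}" using ne0 by (simp add: subset_empty)
    fix X Y assume "X \<in> {Z. \<exists>B\<in>q. E \<inter> h -` B \<subseteq> Z}" "Y \<in> {Z. \<exists>B\<in>q. E \<inter> h -` B \<subseteq> Z}"
    then obtain B1 B2 where BB: "B1 \<in> q" "E \<inter> h -` B1 \<subseteq> X" "B2 \<in> q" "E \<inter> h -` B2 \<subseteq> Y" by auto
    have "B1 \<inter> B2 \<in> q" using BB(1,3) q ultra_inter by blast
    moreover have "E \<inter> h -` (B1 \<inter> B2) \<subseteq> X \<inter> Y" using BB(2,4) by auto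
    ultimately show "X \<inter> Y \<in> {Z. \<exists>B\<in>q. E \<inter> h -` B \<subseteq> Z}" by blast
  next
    fix X Y assume "X \<in> {Z. \<exists>B\<in>q. E \<inter> h -` B \<subseteq> Z}" "X \<subseteq> Y"
    then show "Y \<in> {Z. \<exists>B\<in>q. E \<inter> h -` B \<subseteq> Z}" by blast
  qed
  have "\<exists>M\<in>FF. \<forall>X\<in>FF. M \<subseteq> X \<longrightarrow> X = M"
  proof (rule subset_Zorn_nonempty)
    show "FF \<noteq> {}" using fM0 unfolding FF_def by blast
  next
    fix C assume C: "C \<noteq> {}" "subset.chain FF C"
    have CF: "C \<subseteq> FF" and ch: "\<And>X Y. X \<in> C \<Longrightarrow> Y \<in> C \<Longrightarrow> X \<subseteq> Y \<or> Y \<subseteq> X"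
      using C(2) unfolding subset.chain_def by auto
    have fC: "\<And>X. X \<in> C \<Longrightarrow> filt X" and mC: "\<And>X. X \<in> C \<Longrightarrow> M0 \<subseteq> X" using CF unfolding FF_def by auto
    have "filt (\<Union>C)" unfolding filt_def
    proof (intro conjI ballI allI impI)
      show "{} \<notin> \<Union>C" using fC unfolding filt_def by blast
      fix X Y assume "X \<in> \<Union>C" "Y \<in> \<Union>C"
      then obtain M1 M2 where M: "M1 \<in> C" "X \<in> M1" "M2 \<in> C" "Y \<in> M2" by auto
      show "X \<inter> Y \<in> \<Union>C"
      proof (cases "M1 \<subseteq> M2")
        case True
        then have "X \<inter> Y \<in> M2" using M fC[of M2] unfolding filt_def by blast
        then show ?thesis using M by blast
      next
        case False
        then have "M2 \<subseteq> M1" using ch M by blast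
        then have "X \<inter> Y \<in> M1" using M fC[of M1] unfolding filt_def by blast
        then show ?thesis using M by blast
      qed
    next
      fix X Y assume "X \<in> \<Union>C" "X \<subseteq> Y"
      then show "Y \<in> \<Union>C" using fC unfolding filt_def by blast
    qed
    moreover have "M0 \<subseteq> \<Union>C" using C(1) mC by blast
    ultimately show "\<Union>C \<in> FF" unfolding FF_def by blast
  qed
  then obtain M where MF: "M \<in> FF" and mx0: "\<forall>X\<in>FF. M \<subseteq> X \<longrightarrow> X = M" by blast
  have M: "filt M" "M0 \<subseteq> M" using MF unfolding FF_def by auto
  have mx: "X = M" if "filt X" "M0 \<subseteq> X" "M \<subseteq> X" for X
    using mx0 that unfolding FF_def by blast
  have "E \<inter> h -` UNIV \<subseteq> E" by simp
  hence EM0: "E \<in> M0" unfolding M0_def using ultra_UNIV[OF q] by blast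
  have neM: "M \<noteq> {}" using EM0 M(2) by blast
  have mx': "M' = M" if "filt M'" "M \<subseteq> M'" for M'
    by (rule mx[OF that(1) _ that(2)]) (use M(2) that(2) in auto)
  have uM: "ultra M" by (rule maximal_filt_ultra[OF M(1) neM mx'])
  have "q \<subseteq> umap h M"
  proof
    fix B assume "B \<in> q"
    hence "E \<inter> h -` B \<in> M0" unfolding M0_def by blast
    hence "E \<inter> h -` B \<in> M" using M(2) by blast
    moreover have "E \<inter> h -` B \<subseteq> h -` B" by blast
    ultimately have "h -` B \<in> M" using M(1) unfolding filt_def by blast
    then show "B \<in> umap h M" by (simp add: umap_def)
  qed
  hence "umap h M = q" by (rule ultra_eq[OF umap_ultra[OF uM] q])
  moreover have "E \<in> M" using EM0 M(2) by blast
  ultimately show ?thesis using uM by blast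
qed

lemma in_groupoid:
  fixes g :: "('a::metric_space \<times> 'a) set set"
  assumes "ultra g" "{(x, y). dist x y \<le> R} \<in> g" "R \<ge> 0"
  shows "g \<in> coarse_groupoid"
proof -
  have "g \<in> beta_top closure_of (principal ` {(x, y). dist x y \<le> R})"
    unfolding closure_principal using assms(1,2) by simp
  then show ?thesis unfolding coarse_groupoid_def using assms(3) by blast
qed

lemma supp_transfer:
  fixes f :: "'a \<Rightarrow> 'b::metric_space" and V :: "'b set set set"
  assumes inv: "invariant V" and fU: "umap f ` U \<subseteq> V"
    and cA: "beta_top closure_of (principal ` A) \<subseteq> U" and C: "C \<ge> 0"
    and B: "B \<subseteq> {y. \<exists>x\<in>A. dist y (f x) \<le> C}"
  shows "beta_top closure_of (principal ` B) \<subseteq> V"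
proof
  fix p assume "p \<in> beta_top closure_of (principal ` B)"
  hence p: "ultra p" "B \<in> p" by (auto simp: closure_principal)
  define E where "E = {(y, y'). y \<in> B \<and> y' \<in> f ` A \<and> dist y y' \<le> C}"
  have "B \<subseteq> fst ` E"
  proof
    fix y assume "y \<in> B"
    then obtain x where "x \<in> A" "dist y (f x) \<le> C" using B by blast
    then have "(y, f x) \<in> E" using \<open>y \<in> B\<close> by (simp add: E_def)
    then show "y \<in> fst ` E" by force
  qed
  hence "fst ` E \<in> p" using p ultra_mono by blast
  then obtain g where g: "ultra g" "E \<in> g" "umap fst g = p" using ultra_lift[OF p(1)] by blast
  have "E \<subseteq> {(x, y). dist x y \<le> C}" by (auto simp: E_def)
  hence "{(x, y). dist x y \<le> C} \<in> g" using g ultra_mono by blast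
  hence gG: "g \<in> coarse_groupoid" using in_groupoid g(1) C by blast
  define q where "q = umap snd g"
  have uq: "ultra q" unfolding q_def by (rule umap_ultra[OF g(1)])
  have "E \<subseteq> snd -` (f ` A)" by (auto simp: E_def)
  hence "snd -` (f ` A) \<in> g" using g ultra_mono by blast
  hence "f ` A \<in> q" by (simp add: q_def umap_def)
  then obtain g' where g': "ultra g'" "A \<in> g'" "umap f g' = q" using ultra_lift[OF uq] by blast
  have "g' \<in> U" using cA g' by (auto simp: closure_principal)
  hence "q \<in> V" using fU g'(3) by blast
  then show "p \<in> V" using inv gG g(3) unfolding invariant_def q_def by blast
qed




lemma fiber_bij:
  fixes P :: "'c \<Rightarrow> 'i" and Q :: "'d \<Rightarrow> 'i"
  assumes cP: "\<And>i. countable {a. P a = i}" and iP: "\<And>i. infinite {a. P a = i}"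
    and cQ: "\<And>i. countable {b. Q b = i}" and iQ: "\<And>i. infinite {b. Q b = i}"
  shows "\<exists>h. bij h \<and> (\<forall>a. Q (h a) = P a)"
proof -
  define eP where "eP i = from_nat_into {a. P a = i}" for i
  define eQ where "eQ i = from_nat_into {b. Q b = i}" for i
  have bP: "bij_betw (eP i) UNIV {a. P a = i}" for i
    unfolding eP_def by (rule bij_betw_from_nat_into[OF cP iP])
  have bQ: "bij_betw (eQ i) UNIV {b. Q b = i}" for i
    unfolding eQ_def by (rule bij_betw_from_nat_into[OF cQ iQ])
  define h where "h a = eQ (P a) (inv_into UNIV (eP (P a)) a)" for a
  have Qh: "Q (h a) = P a" for a
    using bij_betw_apply[OF bQ[of "P a"], of "inv_into UNIV (eP (P a)) a"] by (simp add: h_def)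
  have "inj h"
  proof (rule injI)
    fix a a' assume e: "h a = h a'"
    hence "Q (h a) = Q (h a')" by simp
    hence Pa: "P a = P a'" by (simp add: Qh)
    have "inv_into UNIV (eP (P a)) a = inv_into UNIV (eP (P a)) a'"
      using e Pa bij_betw_imp_inj_on[OF bQ[of "P a"]] unfolding h_def by (auto dest: injD)
    hence "eP (P a) (inv_into UNIV (eP (P a)) a) = eP (P a) (inv_into UNIV (eP (P a)) a')" by simp
    then show "a = a'"
      using bij_betw_inv_into_right[OF bP[of "P a"], of a] bij_betw_inv_into_right[OF bP[of "P a"], of a'] Pa
      by simp
  qed
  moreover have "surj h"
    unfolding surj_def
  proof
    fix b
    define i where "i = Q b"
    have "b \<in> {b'. Q b' = i}" by (simp add: i_def)
    hence "b \<in> range (eQ i)" using bij_betw_imp_surj_on[OF bQ[of i]] by simp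
    then obtain n where n: "eQ i n = b" by blast
    define a where "a = eP i n"
    have Pa: "P a = i" using bij_betw_apply[OF bP[of i], of n] by (simp add: a_def)
    have "inv_into UNIV (eP i) a = n" unfolding a_def by (rule bij_betw_inv_into_left[OF bP]) simp
    then show "\<exists>a. b = h a" by (intro exI[of _ a]) (simp add: h_def Pa n)
  qed
  ultimately show ?thesis using Qh by (auto simp: bij_def)
qed

lemma fib_fst: "{a :: 'x \<times> nat. fst a = x} = {x} \<times> UNIV" by auto

lemma infinite_single_times: "infinite ({x} \<times> (UNIV :: nat set))"
proof
  assume "finite ({x} \<times> (UNIV :: nat set))"
  hence "finite (snd ` ({x} \<times> (UNIV :: nat set)))" by (rule finite_imageI)
  moreover have "snd ` ({x} \<times> (UNIV :: nat set)) = UNIV" by force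
  ultimately show False by simp
qed

lemma construct_psi:
  fixes f :: "'a \<Rightarrow> 'b::metric_space" and g :: "'b \<Rightarrow> 'a"
  assumes fa: "\<And>x. finite {y. g y = x}" and fb: "\<And>y. finite {x. f x = y}"
    and C2: "\<And>y. dist (f (g y)) y \<le> C2"
  shows "\<exists>\<psi> :: 'b \<times> nat \<Rightarrow> 'a \<times> nat. bij \<psi> \<and> (\<forall>y m x k. \<psi> (y, m) = (x, k) \<longrightarrow> dist y (f x) \<le> C2)"
proof -
  define Q :: "('a \<times> nat) + ('b \<times> nat) \<Rightarrow> 'a" where "Q = case_sum (\<lambda>a. fst a) (\<lambda>b. g (fst b))"
  define Q' :: "('a \<times> nat) + ('b \<times> nat) \<Rightarrow> 'b" where "Q' = case_sum (\<lambda>a. f (fst a)) (\<lambda>b. fst b)"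
  have fq: "{s. Q s = x} = Inl ` ({x} \<times> UNIV) \<union> Inr ` ({y. g y = x} \<times> UNIV)" for x
  proof (intro set_eqI iffI)
    fix s assume "s \<in> {s. Q s = x}"
    then show "s \<in> Inl ` ({x} \<times> UNIV) \<union> Inr ` ({y. g y = x} \<times> UNIV)"
      by (cases s) (auto simp: Q_def mem_Times_iff image_iff)
  qed (auto simp: Q_def)
  have fq': "{s. Q' s = y} = Inl ` ({x. f x = y} \<times> UNIV) \<union> Inr ` ({y} \<times> UNIV)" for y
  proof (intro set_eqI iffI)
    fix s assume "s \<in> {s. Q' s = y}"
    then show "s \<in> Inl ` ({x. f x = y} \<times> UNIV) \<union> Inr ` ({y} \<times> UNIV)"
      by (cases s) (auto simp: Q'_def mem_Times_iff image_iff)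
  qed (auto simp: Q'_def)
  have infl: "infinite (Inl ` ({x} \<times> (UNIV :: nat set)) :: (('a \<times> nat) + ('b \<times> nat)) set)" for x
  proof
    assume "finite (Inl ` ({x} \<times> (UNIV :: nat set)) :: (('a \<times> nat) + ('b \<times> nat)) set)"
    hence "finite ({x} \<times> (UNIV :: nat set))" by (rule finite_imageD) (simp add: inj_on_def)
    then show False using infinite_single_times[of x] by blast
  qed
  have infr: "infinite (Inr ` ({y} \<times> (UNIV :: nat set)) :: (('a \<times> nat) + ('b \<times> nat)) set)" for y
  proof
    assume "finite (Inr ` ({y} \<times> (UNIV :: nat set)) :: (('a \<times> nat) + ('b \<times> nat)) set)"
    hence "finite ({y} \<times> (UNIV :: nat set))" by (rule finite_imageD) (simp add: inj_on_def)
    then show False using infinite_single_times[of y] by blast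

  qed
  obtain \<alpha> :: "'a \<times> nat \<Rightarrow> ('a \<times> nat) + ('b \<times> nat)" where \<alpha>: "bij \<alpha>" "\<And>a. Q (\<alpha> a) = fst a"
  proof -
    have c1: "countable {a :: 'a \<times> nat. fst a = i}" for i unfolding fib_fst by simp
    have i1: "infinite {a :: 'a \<times> nat. fst a = i}" for i unfolding fib_fst by (rule infinite_single_times)
    have c2: "countable {b. Q b = i}" for i unfolding fq using fa[of i] by (auto intro: countable_finite)
    have i2: "infinite {b. Q b = i}" for i unfolding fq using infl[of i] by simp
    have "\<exists>h. bij h \<and> (\<forall>a :: 'a \<times> nat. Q (h a) = fst a)" by (rule fiber_bij[OF c1 i1 c2 i2])
    then show ?thesis using that by blast
  qed
  obtain \<beta> :: "'b \<times> nat \<Rightarrow> ('a \<times> nat) + ('b \<times> nat)" where \<beta>: "bij \<beta>" "\<And>b. Q' (\<beta> b) = fst b"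
  proof -
    have c1: "countable {a :: 'b \<times> nat. fst a = i}" for i unfolding fib_fst by simp
    have i1: "infinite {a :: 'b \<times> nat. fst a = i}" for i unfolding fib_fst by (rule infinite_single_times)
    have c2: "countable {b. Q' b = i}" for i unfolding fq' using fb[of i] by (auto intro: countable_finite)
    have i2: "infinite {b. Q' b = i}" for i unfolding fq' using infr[of i] by simp
    have "\<exists>h. bij h \<and> (\<forall>a :: 'b \<times> nat. Q' (h a) = fst a)" by (rule fiber_bij[OF c1 i1 c2 i2])

    then show ?thesis using that by blast
  qed
  define \<psi> where "\<psi> = inv \<alpha> \<circ> \<beta>"
  have b\<psi>: "bij \<psi>" unfolding \<psi>_def using \<alpha>(1) \<beta>(1) by (simp add: bij_comp bij_imp_bij_inv)
  have "0 \<le> dist (f (g y0)) y0" for y0 by simp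
  hence C2nn: "C2 \<ge> 0" using C2 by (meson order_trans)
  have "dist y (f x) \<le> C2" if e: "\<psi> (y, m) = (x, k)" for y m x k
  proof -
    have "inv \<alpha> (\<beta> (y, m)) = (x, k)" using e by (simp add: \<psi>_def)
    hence "\<alpha> (inv \<alpha> (\<beta> (y, m))) = \<alpha> (x, k)" by simp
    hence "\<alpha> (x, k) = \<beta> (y, m)" using \<alpha>(1) by (simp add: bij_is_surj surj_f_inv_f)

    then obtain s where s: "\<alpha> (x, k) = s" "\<beta> (y, m) = s" by blast
    have q: "Q s = x" "Q' s = y" using \<alpha>(2)[of "(x, k)"] \<beta>(2)[of "(y, m)"] s by auto
    show ?thesis
    proof (cases s)
      case (Inl a)
      then show ?thesis using q C2nn by (simp add: Q_def Q'_def)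
    next
      case (Inr b)
      then have "g (fst b) = x" "fst b = y" using q by (auto simp: Q_def Q'_def)
      then show ?thesis using C2[of y] by (simp add: dist_commute)
    qed
  qed
  then show ?thesis using b\<psi> by blast
qed


lemma cj_inv':
  assumes p: "bij \<psi>" and vz: "\<And>v. v \<notin> l2 \<Longrightarrow> T v = 0"
  shows "cj (inv \<psi>) (cj \<psi> T) = T"
proof (rule ext)
  fix v
  show "cj (inv \<psi>) (cj \<psi> T) v = T v"
  proof (cases "v \<in> l2")
    case True
    have "v \<circ> \<psi> \<in> l2" using True l2_reindex[OF p] by blast
    then show ?thesis using True by (simp add: cj_def inv_inv_eq[OF p] comp_bij_inv[OF p] comp_inv_bij[OF p])
  next
    case False
    then show ?thesis by (simp add: cj_def vz)
  qed
qed

lemma alg_roe_roe: assumes "T \<in> alg_roe" shows "T \<in> roe"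
proof -
  have TB: "T \<in> BOP" using assms by (simp add: alg_roe_def)
  have "T - T = 0" by simp
  then show ?thesis unfolding roe_def using TB assms by (auto intro!: bexI[of _ T])
qed

lemma roe_BOP: "T \<in> roe \<Longrightarrow> T \<in> BOP" by (simp add: roe_def)

theorem proposition2p7:
  fixes f :: "'a::metric_space \<Rightarrow> 'b::metric_space"
    and U :: "'a set set set" and V :: "'b set set set"
  assumes "coarse_ideal_pair U" and "coarse_ideal_pair V"
    and "coarse_equiv_pairs f U V"
  shows "\<exists>W :: ('a \<times> nat \<Rightarrow> complex) \<Rightarrow> ('b \<times> nat \<Rightarrow> complex).
           isometry W \<and> covers W f
           \<and> Ad W ` ideal_I U \<subseteq> ideal_I V
           \<and> Ad W ` ideal_G U \<subseteq> ideal_G V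
           \<and> unitary W"
proof -
  have bgX: "bounded_geometry (UNIV::'a set)" using assms(1) by (simp add: coarse_ideal_pair_def)
  have bgY: "bounded_geometry (UNIV::'b set)" using assms(2) by (simp add: coarse_ideal_pair_def)
  have ce: "coarse_equivalence f" and invV: "invariant V" and fUV: "umap f ` U \<subseteq> V"
    using assms(3) by (simp_all add: coarse_equiv_pairs_def)
  obtain g C1 C2 where bf: "bornologous f" and bg: "bornologous g"
    and C1: "\<And>x. dist (g (f x)) x \<le> C1" and C2: "\<And>y. dist (f (g y)) y \<le> C2"
    using ce unfolding coarse_equivalence_def by blast
  have "0 \<le> dist (f (g y0)) y0" for y0 by simp
  hence C2nn: "0 \<le> C2" using C2 by (meson order_trans)
  have ballX: "\<exists>N. \<forall>x::'a. finite {y::'a. dist x y \<le> R} \<and> card {y::'a. dist x y \<le> R} \<le> N" for R :: real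
    using bgX unfolding bounded_geometry_def by simp
  have ballY: "\<exists>N. \<forall>x::'b. finite {y::'b. dist x y \<le> R} \<and> card {y::'b. dist x y \<le> R} \<le> N" for R :: real
    using bgY unfolding bounded_geometry_def by simp
  have fa: "finite {y. g y = x}" for x
  proof -
    obtain N where N: "\<forall>z::'b. finite {y::'b. dist z y \<le> C2} \<and> card {y::'b. dist z y \<le> C2} \<le> N" using ballY by blast
    have "{y. g y = x} \<subseteq> {y. dist (f x) y \<le> C2}" using C2 by auto
    then show ?thesis using N finite_subset by blast
  qed
  have fb: "finite {x. f x = y}" for y
  proof -
    obtain N where N: "\<forall>z::'a. finite {y::'a. dist z y \<le> C1} \<and> card {y::'a. dist z y \<le> C1} \<le> N" using ballX by blast
    have "{x. f x = y} \<subseteq> {x. dist (g y) x \<le> C1}" using C1 by auto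
    then show ?thesis using N finite_subset by blast
  qed
  obtain \<psi> :: "'b \<times> nat \<Rightarrow> 'a \<times> nat" where b\<psi>: "bij \<psi>"
    and \<psi>d: "\<And>y m x k. \<psi> (y, m) = (x, k) \<Longrightarrow> dist y (f x) \<le> C2"
    using construct_psi[OF fa fb C2] by blast
  have binv: "bij (inv \<psi>)" using b\<psi> bij_imp_bij_inv by blast
  have FxD: "dist y (f x) \<le> C2" if xin: "x \<in> Fx \<psi> y" for x y
  proof -
    obtain m k where "\<psi> (y, m) = (x, k)" using xin unfolding Fx_def by blast
    then show ?thesis by (rule \<psi>d)
  qed
  have FxiD: "dist y (f x) \<le> C2" if yin: "y \<in> Fx (inv \<psi>) x" for x y
  proof -
    obtain m k where "inv \<psi> (x, m) = (y, k)" using yin unfolding Fx_def by blast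
    hence "\<psi> (y, k) = (x, m)" using b\<psi> by (metis bij_inv_eq_iff)
    then show ?thesis by (rule \<psi>d)
  qed
  obtain Sg where Sg: "\<And>x y. dist x y \<le> C2 \<Longrightarrow> dist (g x) (g y) \<le> Sg"
    using bg unfolding bornologous_def by blast
  obtain NX where NX: "\<And>z::'a. finite {y::'a. dist z y \<le> C1 + Sg} \<and> card {y::'a. dist z y \<le> C1 + Sg} \<le> NX"
    using ballX by blast
  have H2: "finite (Fx \<psi> y) \<and> card (Fx \<psi> y) \<le> NX" for y
  proof -
    have sub: "Fx \<psi> y \<subseteq> {x. dist (g y) x \<le> C1 + Sg}"
    proof
      fix x assume "x \<in> Fx \<psi> y"
      hence "dist y (f x) \<le> C2" by (rule FxD)
      hence a: "dist (g y) (g (f x)) \<le> Sg" by (rule Sg)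
      have "dist (g y) x \<le> dist (g y) (g (f x)) + dist (g (f x)) x" by (rule dist_triangle)
      then show "x \<in> {x. dist (g y) x \<le> C1 + Sg}" using a C1[of x] by simp
    qed
    have fin: "finite {x. dist (g y) x \<le> C1 + Sg}" and cn: "card {x. dist (g y) x \<le> C1 + Sg} \<le> NX"
      using NX[of "g y"] by auto
    have "card (Fx \<psi> y) \<le> card {x. dist (g y) x \<le> C1 + Sg}" by (rule card_mono[OF fin sub])
    then show ?thesis using finite_subset[OF sub fin] cn by linarith
  qed
  obtain NY where NY: "\<And>z::'b. finite {y::'b. dist z y \<le> C2} \<and> card {y::'b. dist z y \<le> C2} \<le> NY"
    using ballY by blast
  have H2i: "finite (Fx (inv \<psi>) x) \<and> card (Fx (inv \<psi>) x) \<le> NY" for x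
  proof -
    have sub: "Fx (inv \<psi>) x \<subseteq> {y. dist (f x) y \<le> C2}"
      using FxiD by (auto simp: dist_commute)
    have fin: "finite {y. dist (f x) y \<le> C2}" and cn: "card {y. dist (f x) y \<le> C2} \<le> NY"
      using NY[of "f x"] by auto
    have "card (Fx (inv \<psi>) x) \<le> card {y. dist (f x) y \<le> C2}" by (rule card_mono[OF fin sub])
    then show ?thesis using finite_subset[OF sub fin] cn by linarith
  qed
  have finF: "finite (Fx \<psi> y)" for y using H2 by blast
  have finFi: "finite (Fx (inv \<psi>) x)" for x using H2i by blast
  have H3: "\<exists>R'. \<forall>y y' x x'. x \<in> Fx \<psi> y \<longrightarrow> x' \<in> Fx \<psi> y' \<longrightarrow> dist x x' \<le> R \<longrightarrow> dist y y' \<le> R'" for R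
  proof -
    obtain Sf where Sf: "\<And>x x'. dist x x' \<le> R \<Longrightarrow> dist (f x) (f x') \<le> Sf"
      using bf unfolding bornologous_def by blast
    have "dist y y' \<le> 2 * C2 + Sf" if "x \<in> Fx \<psi> y" "x' \<in> Fx \<psi> y'" "dist x x' \<le> R" for y y' x x'
    proof -
      have a: "dist y (f x) \<le> C2" "dist y' (f x') \<le> C2" using FxD that(1,2) by auto
      have b: "dist (f x) (f x') \<le> Sf" using Sf that(3) by blast
      have "dist y y' \<le> dist y (f x) + dist (f x) y'" by (rule dist_triangle)
      also have "dist (f x) y' \<le> dist (f x) (f x') + dist (f x') y'" by (rule dist_triangle)
      finally show ?thesis using a b by (simp add: dist_commute)
    qed
    then show ?thesis by blast
  qed
  have H3i: "\<exists>R'. \<forall>x x' y y'. y \<in> Fx (inv \<psi>) x \<longrightarrow> y' \<in> Fx (inv \<psi>) x' \<longrightarrow> dist y y' \<le> R \<longrightarrow> dist x x' \<le> R'" for R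
  proof -
    obtain Sg' where Sg': "\<And>z z'. dist z z' \<le> R + 2 * C2 \<Longrightarrow> dist (g z) (g z') \<le> Sg'"
      using bg unfolding bornologous_def by blast
    have "dist x x' \<le> 2 * C1 + Sg'" if "y \<in> Fx (inv \<psi>) x" "y' \<in> Fx (inv \<psi>) x'" "dist y y' \<le> R" for x x' y y'
    proof -
      have a: "dist y (f x) \<le> C2" "dist y' (f x') \<le> C2" using FxiD that(1,2) by auto
      have "dist (f x) (f x') \<le> dist (f x) y + dist y (f x')" by (rule dist_triangle)
      also have "dist y (f x') \<le> dist y y' + dist y' (f x')" by (rule dist_triangle)
      finally have "dist (f x) (f x') \<le> R + 2 * C2" using a that(3) by (simp add: dist_commute)
      hence b: "dist (g (f x)) (g (f x')) \<le> Sg'" by (rule Sg')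
      have "dist x x' \<le> dist x (g (f x)) + dist (g (f x)) x'" by (rule dist_triangle)
      also have "dist (g (f x)) x' \<le> dist (g (f x)) (g (f x')) + dist (g (f x')) x'" by (rule dist_triangle)
      finally show ?thesis using b C1[of x] C1[of x'] by (simp add: dist_commute)
    qed
    then show ?thesis by blast
  qed
  have roeY: "cj \<psi> T \<in> roe" if "T \<in> roe" for T by (rule cj_roe[OF b\<psi> that finF H3])
  have roeX: "cj (inv \<psi>) T \<in> roe" if "T \<in> roe" for T by (rule cj_roe[OF binv that finFi H3i])
  have algY: "cj \<psi> T \<in> alg_roe" if "T \<in> alg_roe" for T by (rule cj_alg_roe[OF b\<psi> that finF H3])
  have backr: "A \<in> roe" if vz: "\<And>v. v \<notin> l2 \<Longrightarrow> A v = 0" and r: "cj \<psi> A \<in> roe" for A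
  proof -
    have e: "cj (inv \<psi>) (cj \<psi> A) = A" by (rule cj_inv'[OF b\<psi>]) (rule vz)
    have "cj (inv \<psi>) (cj \<psi> A) \<in> roe" by (rule roeX[OF r])
    then show ?thesis by (simp only: e)
  qed
  have suppV: "supported_in V (cj \<psi> T)" if TB: "T \<in> BOP" and sU: "supported_in U T" for T
    unfolding supported_in_def
  proof (intro allI impI)
    fix e :: real assume e: "e > 0"
    obtain d where d: "d > 0" "fst ` supp_eps e (cj \<psi> T) \<subseteq> {y. \<exists>x\<in>Fx \<psi> y. x \<in> fst ` supp_eps d T}"
      using cj_supp[OF b\<psi> TB H2 e] by blast
    have cA: "beta_top closure_of (principal ` fst ` supp_eps d T) \<subseteq> U"
      using sU d(1) unfolding supported_in_def by blast
    have B: "fst ` supp_eps e (cj \<psi> T) \<subseteq> {y. \<exists>x\<in>fst ` supp_eps d T. dist y (f x) \<le> C2}"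
    proof
      fix y assume "y \<in> fst ` supp_eps e (cj \<psi> T)"
      then obtain x where x: "x \<in> Fx \<psi> y" "x \<in> fst ` supp_eps d T" using d(2) by blast
      have "dist y (f x) \<le> C2" by (rule FxD[OF x(1)])
      then show "y \<in> {y. \<exists>x\<in>fst ` supp_eps d T. dist y (f x) \<le> C2}" using x(2) by blast
    qed

    show "beta_top closure_of (principal ` fst ` supp_eps e (cj \<psi> T)) \<subseteq> V"
      by (rule supp_transfer[OF invV fUV cA C2nn B])
  qed
  define W where "W = rx \<psi>"
  have AdW: "Ad W T = cj \<psi> T" if "T \<in> BOP" for T unfolding W_def by (rule Ad_rx[OF b\<psi> that])
  have iso: "isometry W" unfolding W_def by (rule rx_isometry[OF b\<psi>])
  have uni: "unitary W" unfolding W_def by (rule rx_unitary[OF b\<psi>])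
  have cov: "covers W f" unfolding covers_def
  proof (intro exI[of _ C2] conjI allI impI)
    show "0 \<le> C2" by (rule C2nn)
    fix x y assume d: "dist y (f x) > C2"
    show "entry W y x = 0"
    proof (rule ext)
      fix w
      show "entry W y x w = 0 w"
      proof (cases "w \<in> l2")
        case False then show ?thesis by (simp add: entry_def)
      next
        case True
        have el: "embed x w \<in> l2" using embed_l2[OF True, of x] by (rule conjunct1)
        have "W (embed x w) (y, n) = 0" for n
        proof -
          obtain x1 k where xk: "\<psi> (y, n) = (x1, k)" by (cases "\<psi> (y, n)")
          have "x1 \<noteq> x" using \<psi>d[OF xk] d by auto
          then show ?thesis using el by (simp add: W_def rx_def xk embed_def)
        qed
        then show ?thesis using True by (simp add: entry_def fun_eq_iff)
      qed
    qed
  qed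
  have G: "Ad W ` ideal_G U \<subseteq> ideal_G V"
  proof
    fix Z assume "Z \<in> Ad W ` ideal_G U"
    then obtain T where T: "T \<in> roe" "supported_in U T" and Z: "Z = Ad W T" by (auto simp: ideal_G_def)
    have TB: "T \<in> BOP" using T(1) by (rule roe_BOP)
    have "cj \<psi> T \<in> roe" by (rule roeY[OF T(1)])
    moreover have "supported_in V (cj \<psi> T)" by (rule suppV[OF TB T(2)])
    ultimately show "Z \<in> ideal_G V" unfolding Z AdW[OF TB] by (simp add: ideal_G_def)
  qed
  have I: "Ad W ` ideal_I U \<subseteq> ideal_I V"
  proof
    fix Z assume "Z \<in> Ad W ` ideal_I U"
    then obtain T where T: "T \<in> ideal_I U" and Z: "Z = Ad W T" by blast
    show "Z \<in> ideal_I V" unfolding ideal_I_def ideal_generated_def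
    proof (rule InterI)
      fix K assume "K \<in> {I. closed_ideal_in roe I \<and> {T \<in> alg_roe. supported_in V T} \<subseteq> I}"
      hence cK: "closed_ideal_in roe K" and JK: "{T \<in> alg_roe. supported_in V T} \<subseteq> K" by auto
      have cKd: "K \<subseteq> roe \<and> 0 \<in> K
     \<and> (\<forall>S\<in>K. \<forall>T\<in>K. S + T \<in> K)
     \<and> (\<forall>c. \<forall>S\<in>K. (\<lambda>v. csc c (S v)) \<in> K)
     \<and> (\<forall>a\<in>roe. \<forall>S\<in>K. a \<circ> S \<in> K \<and> S \<circ> a \<in> K)
     \<and> (\<forall>T\<in>roe. (\<forall>\<epsilon>>0. \<exists>S\<in>K. opnorm (T - S) < \<epsilon>) \<longrightarrow> T \<in> K)"
        using cK unfolding closed_ideal_in_def .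
      have Kroe: "K \<subseteq> roe" using cKd by (rule conjunct1)
      have K0: "0 \<in> K" using cKd[THEN conjunct2] by (rule conjunct1)
      have Kadd': "\<forall>S\<in>K. \<forall>T\<in>K. S + T \<in> K" using cKd[THEN conjunct2, THEN conjunct2] by (rule conjunct1)
      have Kscal': "\<forall>c. \<forall>S\<in>K. (\<lambda>v. csc c (S v)) \<in> K"
        using cKd[THEN conjunct2, THEN conjunct2, THEN conjunct2] by (rule conjunct1)
      have Kmul': "\<forall>a\<in>roe. \<forall>S\<in>K. a \<circ> S \<in> K \<and> S \<circ> a \<in> K"
        using cKd[THEN conjunct2, THEN conjunct2, THEN conjunct2, THEN conjunct2] by (rule conjunct1)
      have Kcl': "\<forall>T\<in>roe. (\<forall>\<epsilon>>0. \<exists>S\<in>K. opnorm (T - S) < \<epsilon>) \<longrightarrow> T \<in> K"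
        using cKd[THEN conjunct2, THEN conjunct2, THEN conjunct2, THEN conjunct2] by (rule conjunct2)
      have Kadd: "S + T \<in> K" if "S \<in> K" "T \<in> K" for S T using Kadd' that by blast
      have Kscal: "(\<lambda>v. csc c (S v)) \<in> K" if "S \<in> K" for c S using Kscal' that by blast
      have Kmul: "a \<circ> S \<in> K \<and> S \<circ> a \<in> K" if "a \<in> roe" "S \<in> K" for a S using Kmul' that by blast
      have Kcl: "T \<in> K" if "T \<in> roe" "\<forall>e>0. \<exists>S\<in>K. opnorm (T - S) < e" for T using Kcl' that by blast
      define I' where "I' = {S \<in> roe. cj \<psi> S \<in> K}"
      have I'B: "S \<in> BOP" if "S \<in> I'" for S using that roe_BOP by (auto simp: I'_def)
      have mulI: "a \<circ> S \<in> I' \<and> S \<circ> a \<in> I'" if a: "a \<in> roe" and S: "S \<in> I'"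
        for a S :: "('a \<times> nat \<Rightarrow> complex) \<Rightarrow> ('a \<times> nat \<Rightarrow> complex)"
      proof -
        have aB: "a \<in> BOP" using a by (rule roe_BOP)
        have SB: "S \<in> BOP" using S by (rule I'B)
        have ca: "cj \<psi> a \<in> roe" by (rule roeY[OF a])
        have cS: "cj \<psi> S \<in> K" using S by (simp add: I'_def)
        have k1: "cj \<psi> (a \<circ> S) \<in> K" unfolding cj_comp[OF b\<psi> aB SB] using Kmul[OF ca cS] by blast
        have k2: "cj \<psi> (S \<circ> a) \<in> K" unfolding cj_comp[OF b\<psi> SB aB] using Kmul[OF ca cS] by blast
        have o1: "(a \<circ> S) v = 0" if "v \<notin> l2" for v
          using BOP_out[OF SB that] BOP_zero[OF aB] by simp
        have o2: "(S \<circ> a) v = 0" if "v \<notin> l2" for v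
          using BOP_out[OF aB that] BOP_zero[OF SB] by simp
        have "a \<circ> S \<in> roe" by (rule backr[OF o1 subsetD[OF Kroe k1]])
        moreover have "S \<circ> a \<in> roe" by (rule backr[OF o2 subsetD[OF Kroe k2]])

        ultimately show ?thesis using k1 k2 by (simp add: I'_def)
      qed
      have cI': "closed_ideal_in roe I'" unfolding closed_ideal_in_def
      proof (intro conjI ballI allI impI)
        show "I' \<subseteq> roe" by (auto simp: I'_def)
      next
        have "cj \<psi> 0 \<in> roe" using K0 Kroe by auto
        hence "(0 :: ('a \<times> nat \<Rightarrow> complex) \<Rightarrow> ('a \<times> nat \<Rightarrow> complex)) \<in> roe" by (rule backr[rotated]) simp
        then show "0 \<in> I'" using K0 by (simp add: I'_def)
      next
        fix S T assume S: "S \<in> I'" and T: "T \<in> I'"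
        have k: "cj \<psi> (S + T) \<in> K" using S T Kadd by (simp add: I'_def cj_add)
        have o: "(S + T) v = 0" if "v \<notin> l2" for v
          using BOP_out[OF I'B[OF S] that] BOP_out[OF I'B[OF T] that] by simp
        have "S + T \<in> roe" by (rule backr[OF o subsetD[OF Kroe k]])
        then show "S + T \<in> I'" using k by (simp add: I'_def)
      next
        fix c S assume S: "S \<in> I'"
        have k: "cj \<psi> (\<lambda>v. csc c (S v)) \<in> K" using S Kscal by (simp add: I'_def cj_scal)
        have o: "(\<lambda>v. csc c (S v)) v = 0" if "v \<notin> l2" for v
          using BOP_out[OF I'B[OF S] that] by simp
        have "(\<lambda>v. csc c (S v)) \<in> roe" by (rule backr[OF o subsetD[OF Kroe k]])
        then show "(\<lambda>v. csc c (S v)) \<in> I'" using k by (simp add: I'_def)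
      next
        fix a S :: "('a \<times> nat \<Rightarrow> complex) \<Rightarrow> ('a \<times> nat \<Rightarrow> complex)" assume "a \<in> roe" "S \<in> I'"
        then show "a \<circ> S \<in> I'" using mulI by blast
      next
        fix a S :: "('a \<times> nat \<Rightarrow> complex) \<Rightarrow> ('a \<times> nat \<Rightarrow> complex)" assume "a \<in> roe" "S \<in> I'"
        then show "S \<circ> a \<in> I'" using mulI by blast
      next
        fix T assume T: "T \<in> roe" and ap: "\<forall>e>0. \<exists>S\<in>I'. opnorm (T - S) < e"
        have "cj \<psi> T \<in> K"
        proof (rule Kcl)
          show "cj \<psi> T \<in> roe" by (rule roeY[OF T])
          show "\<forall>e>0. \<exists>S\<in>K. opnorm (cj \<psi> T - S) < e"
          proof (intro allI impI)
            fix e :: real assume e: "e > 0"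
            obtain S where S: "S \<in> I'" "opnorm (T - S) < e" using ap e by blast
            have "opnorm (cj \<psi> T - cj \<psi> S) < e" using S(2) by (simp add: cj_diff[symmetric] opnorm_cj[OF b\<psi>])
            moreover have "cj \<psi> S \<in> K" using S(1) by (simp add: I'_def)
            ultimately show "\<exists>S\<in>K. opnorm (cj \<psi> T - S) < e" by blast
          qed
        qed
        then show "T \<in> I'" using T by (simp add: I'_def)
      qed
      have JI': "{T \<in> alg_roe. supported_in U T} \<subseteq> I'"
      proof
        fix S assume S: "S \<in> {T \<in> alg_roe. supported_in U T}"
        hence Sa: "S \<in> alg_roe" and Ss: "supported_in U S" by auto
        have SB: "S \<in> BOP" using Sa by (simp add: alg_roe_def)
        have "cj \<psi> S \<in> {T \<in> alg_roe. supported_in V T}" using algY[OF Sa] suppV[OF SB Ss] by simp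
        hence "cj \<psi> S \<in> K" using JK by blast
        then show "S \<in> I'" using alg_roe_roe[OF Sa] by (simp add: I'_def)
      qed
      have "I' \<in> {I. closed_ideal_in roe I \<and> {T \<in> alg_roe. supported_in U T} \<subseteq> I}" using cI' JI' by blast
      with T have "T \<in> I'" unfolding ideal_I_def ideal_generated_def by (rule InterD)

      hence "T \<in> BOP" "cj \<psi> T \<in> K" using I'B by (auto simp: I'_def)
      then show "Z \<in> K" using Z AdW by simp
    qed
  qed
  show ?thesis using iso cov I G uni by blast
qed

end
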